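(* Let $x_1,\dots,x_N$ be nodes with mesh size parameter $\Delta x$ and let $D\in\mathbb{R}^{N\times N}$ be a derivative matrix of order $p$, i.e., $\sum_kD_{i,k}\varphi(x_k)=\varphi'(x_i)+\mathcal{O}(\Delta x^p)$ for smooth $\varphi$ (not necessarily an SBP operator). Let $u$ be a smooth function of $x$ with values in $Y\subset\mathbb{R}^n$, $u_k=u(x_k)$, let $H\colon Y\to\mathbb{R}^{n\times m}$ and $g\colon Y\to\mathbb{R}^m$ be smooth, and let the volume fluxes $g^{\mathrm{vol}}\colon Y\times Y\to\mathbb{R}^m$, $H^{\mathrm{vol}}\colon Y\times Y\to\mathbb{R}^{n\times m}$, $(Hg)^{\mathrm{vol}}\colon Y\times Y\to\mathbb{R}^n$ be smooth, symmetric in their two arguments and consistent ($g^{\mathrm{vol}}(u,u)=g(u)$, $H^{\mathrm{vol}}(u,u)=H(u)$, $(Hg)^{\mathrm{vol}}(u,u)=H(u)g(u)$). Then each of $$\sum_k2D_{i,k}H(u_i)g^{\mathrm{vol}}(u_i,u_k),\qquad \sum_kD_{i,k}H^{\mathrm{vol}}(u_i,u_k)\big(g(u_k)-g(u_i)\big),\qquad \sum_k\Big(2D_{i,k}(Hg)^{\mathrm{vol}}(u_i,u_k)-2D_{i,k}H^{\mathrm{vol}}(u_i,u_k)g(u_i)\Big)$$ equals $H(u(x_i))\,\partial_x g(u(x))|_{x=x_i}+\mathcal{O}(\Delta x^p)$. *)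

theory Defs
  imports "HOL-Analysis.Analysis"
begin

coinductive smooth_on :: "'a::real_normed_vector set \<Rightarrow> ('a \<Rightarrow> 'b::real_normed_vector) \<Rightarrow> bool"
  for S :: "'a set" where
  "continuous_on S f \<Longrightarrow> (\<forall>x\<in>S. f differentiable (at x)) \<Longrightarrow>
     (\<forall>v. smooth_on S (\<lambda>x. frechet_derivative f (at x) v)) \<Longrightarrow> smooth_on S f"

text \<open>A family of grids (indexed by \<open>j\<close>), grid \<open>j\<close> having nodes \<open>x j 0, ..., x j (N j - 1)\<close>,
  mesh size \<open>dx j > 0\<close> with \<open>dx j \<rightarrow> 0\<close>, and derivative matrices \<open>D j\<close>.
  \<open>D\<close> is a derivative matrix of order \<open>p\<close> if for every smooth \<open>\<phi>\<close> the error
  \<open>\<Sum>k D i k \<phi>(x k) - \<phi>'(x i)\<close> is \<open>O(dx^p)\<close>, uniformly in the node index \<open>i\<close>.\<close>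
definition derivative_matrix_of_order ::
  "(nat \<Rightarrow> nat) \<Rightarrow> (nat \<Rightarrow> nat \<Rightarrow> real) \<Rightarrow> (nat \<Rightarrow> real) \<Rightarrow> (nat \<Rightarrow> nat \<Rightarrow> nat \<Rightarrow> real) \<Rightarrow> nat \<Rightarrow> bool" where
  "derivative_matrix_of_order N x dx D p \<longleftrightarrow>
     (\<forall>\<phi> :: real \<Rightarrow> real. smooth_on UNIV \<phi> \<longrightarrow>
        (\<exists>C. \<forall>j. \<forall>i<N j.
           \<bar>(\<Sum>k<N j. D j i k * \<phi> (x j k)) - deriv \<phi> (x j i)\<bar> \<le> C * dx j ^ p))"

end

theory Submission
  imports Defs
begin


lemma smooth_on_unfold:
  "smooth_on S f \<longleftrightarrow> continuous_on S f \<and> (\<forall>x\<in>S. f differentiable (at x)) \<and>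
     (\<forall>v. smooth_on S (\<lambda>x. frechet_derivative f (at x) v))"
  by (subst smooth_on.simps) auto

lemma smooth_on_cont: "smooth_on S f \<Longrightarrow> continuous_on S f"
  using smooth_on_unfold by blast
lemma smooth_on_diff: "smooth_on S f \<Longrightarrow> x \<in> S \<Longrightarrow> f differentiable (at x)"
  using smooth_on_unfold by blast
lemma smooth_on_deriv: "smooth_on S f \<Longrightarrow> smooth_on S (\<lambda>x. frechet_derivative f (at x) v)"
  using smooth_on_unfold by blast
lemma smooth_on_hasderiv: "smooth_on S f \<Longrightarrow> x \<in> S \<Longrightarrow> (f has_derivative frechet_derivative f (at x)) (at x)"
  using smooth_on_diff frechet_derivative_works by blast

lemma diff_imp_cont_on: "(\<forall>x\<in>S. f differentiable (at x)) \<Longrightarrow> continuous_on S f"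
  by (meson continuous_at_imp_continuous_on differentiable_imp_continuous_within)

lemma smooth_coinduct_open:
  assumes S: "open S" and P0: "P f"
    and step: "\<And>h. P h \<Longrightarrow> (\<forall>x\<in>S. h differentiable (at x)) \<and>
         (\<forall>v. \<exists>h'. P h' \<and> (\<forall>x\<in>S. frechet_derivative h (at x) v = h' x))"
  shows "smooth_on S f"
proof -
  have "\<exists>h'. P h' \<and> (\<forall>x\<in>S. h x = h' x) \<Longrightarrow> smooth_on S h" for h
  proof (rule smooth_on.coinduct[where X="\<lambda>h. \<exists>h'. P h' \<and> (\<forall>x\<in>S. h x = h' x)"], assumption, goal_cases)
    case (1 h)
    then obtain h' where Ph': "P h'" and eq: "\<forall>x\<in>S. h x = h' x" by blast
    have hd: "(h has_derivative frechet_derivative h' (at x)) (at x)" if "x \<in> S" for x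
    proof -
      have "h' differentiable (at x)" using step[OF Ph'] that by blast
      then have "(h' has_derivative frechet_derivative h' (at x)) (at x)"
        using frechet_derivative_works by blast
      then show ?thesis
        by (rule has_derivative_transform_within_open[OF _ S that]) (use eq that in auto)
    qed
    have fd: "frechet_derivative h (at x) = frechet_derivative h' (at x)" if "x \<in> S" for x
      using frechet_derivative_at[OF hd[OF that]] by simp
    have dh: "\<forall>x\<in>S. h differentiable (at x)" using hd differentiable_def by blast
    have "\<exists>h''. P h'' \<and> (\<forall>x\<in>S. frechet_derivative h (at x) v = h'' x)" for v
    proof -
      obtain h'' where "P h''" "\<forall>x\<in>S. frechet_derivative h' (at x) v = h'' x"
        using step[OF Ph'] by blast
      then show ?thesis using fd by metis
    qed
    then show ?case using dh diff_imp_cont_on by blast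
  qed
  then show ?thesis using P0 by blast
qed

lemma smooth_on_const:
  fixes S :: "'a::real_normed_vector set" and c :: "'b::real_normed_vector"
  shows "open S \<Longrightarrow> smooth_on S (\<lambda>x. c)"
proof (rule smooth_coinduct_open[where P="\<lambda>h. \<exists>c. h = (\<lambda>x. c)"])
  fix h :: "'a \<Rightarrow> 'b" assume "\<exists>c. h = (\<lambda>x. c)"
  then obtain c where h: "h = (\<lambda>x. c)" by blast
  have fd: "frechet_derivative h (at x) = (\<lambda>v. 0)" for x
    using frechet_derivative_at[OF has_derivative_const[of c "at x"]] h by simp
  show "(\<forall>x\<in>S. h differentiable (at x)) \<and> (\<forall>v. \<exists>h'. (\<exists>c. h' = (\<lambda>x. c)) \<and> (\<forall>x\<in>S. frechet_derivative h (at x) v = h' x))"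
    using fd h by auto
qed auto

lemma smooth_on_linear:
  assumes "open S" "bounded_linear l" shows "smooth_on S l"
proof (rule smooth_on.intros, goal_cases)
  have fd: "frechet_derivative l (at x) = l" for x
    using frechet_derivative_at[OF bounded_linear_imp_has_derivative[OF assms(2)]] by simp
  case 1 show ?case using assms linear_continuous_on by blast
  case 2 show ?case using assms bounded_linear_imp_differentiable by blast
  case 3 show ?case
    unfolding fd by (auto intro: smooth_on_const[OF assms(1)])
qed

lemma smooth_on_linear_comp:
  fixes l :: "'c::real_normed_vector \<Rightarrow> 'b::real_normed_vector" and f :: "'a::real_normed_vector \<Rightarrow> 'c"
  assumes S: "open S" and "bounded_linear l" "smooth_on S f" shows "smooth_on S (\<lambda>x. l (f x))"
proof (rule smooth_coinduct_open[OF S, where P="\<lambda>h. \<exists>(l::'c\<Rightarrow>'b) (f::'a\<Rightarrow>'c). bounded_linear l \<and> smooth_on S f \<and> h = (\<lambda>x. l (f x))"])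
  show "\<exists>(la::'c\<Rightarrow>'b) (f'::'a\<Rightarrow>'c). bounded_linear la \<and> smooth_on S f' \<and> (\<lambda>x. l (f x)) = (\<lambda>x. la (f' x))" using assms by blast
  fix h :: "'a \<Rightarrow> 'b" assume "\<exists>(l::'c\<Rightarrow>'b) (f::'a\<Rightarrow>'c). bounded_linear l \<and> smooth_on S f \<and> h = (\<lambda>x. l (f x))"
  then obtain l :: "'c \<Rightarrow> 'b" and f :: "'a \<Rightarrow> 'c" where l: "bounded_linear l" and f: "smooth_on S f" and h: "h = (\<lambda>x. l (f x))" by blast
  have hd: "(h has_derivative (\<lambda>v. l (frechet_derivative f (at x) v))) (at x)" if "x \<in> S" for x
    using bounded_linear.has_derivative[OF l smooth_on_hasderiv[OF f that]] by (simp add: h)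
  show "(\<forall>x\<in>S. h differentiable (at x)) \<and> (\<forall>v. \<exists>h'. (\<exists>(l::'c\<Rightarrow>'b) (f::'a\<Rightarrow>'c). bounded_linear l \<and> smooth_on S f \<and> h' = (\<lambda>x. l (f x))) \<and> (\<forall>x\<in>S. frechet_derivative h (at x) v = h' x))"
  proof (intro conjI ballI allI)
    show "h differentiable at x" if "x \<in> S" for x using hd[OF that] differentiable_def by blast
    fix v
    show "\<exists>h'. (\<exists>(l::'c\<Rightarrow>'b) (f::'a\<Rightarrow>'c). bounded_linear l \<and> smooth_on S f \<and> h' = (\<lambda>x. l (f x))) \<and> (\<forall>x\<in>S. frechet_derivative h (at x) v = h' x)"
    proof (intro exI[of _ "\<lambda>x. l (frechet_derivative f (at x) v)"] conjI ballI)
      show "\<exists>(l'::'c\<Rightarrow>'b) (f'::'a\<Rightarrow>'c). bounded_linear l' \<and> smooth_on S f' \<and> (\<lambda>x. l (frechet_derivative f (at x) v)) = (\<lambda>x. l' (f' x))"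
        using l smooth_on_deriv[OF f, of v] by blast
      show "frechet_derivative h (at x) v = l (frechet_derivative f (at x) v)" if "x \<in> S" for x
        using frechet_derivative_at[OF hd[OF that]] by metis
    qed
  qed
qed


inductive bsum :: "'a::real_normed_vector set \<Rightarrow> ('b::real_normed_vector \<Rightarrow> 'c::real_normed_vector \<Rightarrow> 'd::real_normed_vector) \<Rightarrow> ('a \<Rightarrow> 'd) \<Rightarrow> bool"
  for S pr where
  bsum0: "bsum S pr (\<lambda>x. 0)"
| bsumI: "smooth_on S f \<Longrightarrow> smooth_on S g \<Longrightarrow> bsum S pr h \<Longrightarrow> bsum S pr (\<lambda>x. pr (f x) (g x) + h x)"

lemma bsum_step:
  fixes S :: "'a::real_normed_vector set" and pr :: "'b::real_normed_vector \<Rightarrow> 'c::real_normed_vector \<Rightarrow> 'd::real_normed_vector"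
    and h :: "'a \<Rightarrow> 'd"
  assumes S: "open S" and bb: "bounded_bilinear pr"
  shows "bsum S pr h \<Longrightarrow> (\<forall>x\<in>S. h differentiable (at x)) \<and>
         (\<forall>v. \<exists>h'. bsum S pr h' \<and> (\<forall>x\<in>S. frechet_derivative h (at x) v = h' x))"
proof (induction rule: bsum.induct)
  case bsum0
  have fd: "frechet_derivative (\<lambda>x::'a. 0::'d) (at x) = (\<lambda>v. 0)" for x
    using frechet_derivative_at[OF has_derivative_const[of 0 "at x"]] by simp
  show ?case using fd by (auto intro: bsum.bsum0)
next
  case (bsumI f g h)
  have hd: "((\<lambda>x. pr (f x) (g x) + h x) has_derivative
      (\<lambda>v. pr (f x) (frechet_derivative g (at x) v) + pr (frechet_derivative f (at x) v) (g x)
           + frechet_derivative h (at x) v)) (at x)" if "x \<in> S" for x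
    using bounded_bilinear.FDERIV[OF bb smooth_on_hasderiv[OF bsumI(1) that] smooth_on_hasderiv[OF bsumI(2) that]]
      bsumI(4) that frechet_derivative_works
    by (intro has_derivative_add) auto
  show ?case
  proof (intro conjI ballI allI)
    show "(\<lambda>x. pr (f x) (g x) + h x) differentiable at x" if "x \<in> S" for x
      using hd[OF that] differentiable_def by blast
    fix v
    obtain h' where h': "bsum S pr h'" "\<forall>x\<in>S. frechet_derivative h (at x) v = h' x"
      using bsumI(4) by blast
    have "bsum S pr (\<lambda>x. pr (f x) (frechet_derivative g (at x) v) +
        ((\<lambda>x. pr (frechet_derivative f (at x) v) (g x) + h' x) x))"
      by (intro bsum.bsumI h' smooth_on_deriv bsumI)
    moreover have "frechet_derivative (\<lambda>x. pr (f x) (g x) + h x) (at x) v =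
       pr (f x) (frechet_derivative g (at x) v) + ((\<lambda>x. pr (frechet_derivative f (at x) v) (g x) + h' x) x)"
      if "x \<in> S" for x
      using sym[OF frechet_derivative_at[OF hd[OF that]]] h'(2) that by (simp add: add.assoc)
    ultimately show "\<exists>h'. bsum S pr h' \<and> (\<forall>x\<in>S. frechet_derivative (\<lambda>x. pr (f x) (g x) + h x) (at x) v = h' x)"
      by blast
  qed
qed

lemma bsum_smooth:
  fixes S :: "'a::real_normed_vector set" and pr :: "'b::real_normed_vector \<Rightarrow> 'c::real_normed_vector \<Rightarrow> 'd::real_normed_vector"
    and h :: "'a \<Rightarrow> 'd"
  shows "open S \<Longrightarrow> bounded_bilinear pr \<Longrightarrow> bsum S pr h \<Longrightarrow> smooth_on S h"
  by (rule smooth_coinduct_open[where P="bsum S pr"]) (auto dest: bsum_step)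

lemma smooth_on_bilinear:
  assumes "open S" "bounded_bilinear pr" "smooth_on S f" "smooth_on S g"
  shows "smooth_on S (\<lambda>x. pr (f x) (g x))"
proof -
  have "bsum S pr (\<lambda>x. pr (f x) (g x) + (\<lambda>x. 0) x)"
    by (intro bsum.intros assms)
  from bsum_smooth[OF assms(1,2) this] show ?thesis by simp
qed

lemma smooth_on_add:
  assumes "open S" "smooth_on S f" "smooth_on S g"
  shows "smooth_on S (\<lambda>x. f x + g x)"
proof -
  have c: "smooth_on S (\<lambda>x. 1::real)" using smooth_on_const assms(1) by blast
  have "bsum S scaleR (\<lambda>x. 1 *\<^sub>R f x + ((\<lambda>x. 1 *\<^sub>R g x + (\<lambda>x. 0) x) x))"
    by (intro bsum.intros assms c)
  from bsum_smooth[OF assms(1) bounded_bilinear_scaleR this] show ?thesis by simp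
qed

lemma smooth_on_scaleR:
  "open S \<Longrightarrow> smooth_on S f \<Longrightarrow> smooth_on S g \<Longrightarrow> smooth_on S (\<lambda>x. f x *\<^sub>R g x)"
  by (rule smooth_on_bilinear[OF _ bounded_bilinear_scaleR])

lemma smooth_on_mult:
  fixes f g :: "'a::real_normed_vector \<Rightarrow> real"
  shows "open S \<Longrightarrow> smooth_on S f \<Longrightarrow> smooth_on S g \<Longrightarrow> smooth_on S (\<lambda>x. f x * g x)"
  by (rule smooth_on_bilinear[OF _ bounded_bilinear_mult])

lemma smooth_on_minus:
  assumes "open S" "smooth_on S f" "smooth_on S g"
  shows "smooth_on S (\<lambda>x. f x - g x)"
proof -
  have "smooth_on S (\<lambda>x. - g x)"
    using smooth_on_linear_comp[OF assms(1) bounded_linear_minus[OF bounded_linear_ident] assms(3)] by simp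
  from smooth_on_add[OF assms(1,2) this] show ?thesis by simp
qed

lemma smooth_on_pair:
  assumes S: "open S" and f: "smooth_on S f" and g: "smooth_on S g"
  shows "smooth_on S (\<lambda>x. (f x, g x))"
proof -
  have "smooth_on S (\<lambda>x. (f x, 0) + (0, g x))"
    by (intro smooth_on_add S smooth_on_linear_comp[OF S _ f] smooth_on_linear_comp[OF S _ g]
        bounded_linear_Pair bounded_linear_ident bounded_linear_zero)
  then show ?thesis by simp
qed


inductive csum :: "'a::real_normed_vector set \<Rightarrow> 'c::euclidean_space set \<Rightarrow> ('a \<Rightarrow> 'c) \<Rightarrow> ('a \<Rightarrow> 'b::real_normed_vector) \<Rightarrow> bool"
  for S T f where
  csum0: "csum S T f (\<lambda>x. 0)"
| csumI: "smooth_on S s \<Longrightarrow> smooth_on T g \<Longrightarrow> csum S T f h \<Longrightarrow> csum S T f (\<lambda>x. s x *\<^sub>R g (f x) + h x)"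

lemma csum_sum:
  fixes S :: "'a::real_normed_vector set" and T :: "'c::euclidean_space set" and h0 :: "'a \<Rightarrow> 'b::real_normed_vector"
  assumes "finite B" "csum S T f h0" "\<And>b. b \<in> B \<Longrightarrow> smooth_on S (s b)" "\<And>b. b \<in> B \<Longrightarrow> smooth_on T (g b)"
  shows "csum S T f (\<lambda>x. (\<Sum>b\<in>B. s b x *\<^sub>R g b (f x)) + h0 x)"
  using assms
proof (induction B rule: finite_induct)
  case empty then show ?case by simp
next
  case (insert b B)
  have "csum S T f (\<lambda>x. s b x *\<^sub>R g b (f x) + ((\<lambda>x. (\<Sum>b\<in>B. s b x *\<^sub>R g b (f x)) + h0 x) x))"
    using insert by (intro csum.csumI) auto
  then show ?case using insert by (simp add: add.assoc)
qed

lemma csum_step: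
  fixes S :: "'a::real_normed_vector set" and T :: "'c::euclidean_space set" and f :: "'a \<Rightarrow> 'c"
    and h :: "'a \<Rightarrow> 'b::real_normed_vector"
  assumes S: "open S" and T: "open T" and f: "smooth_on S f" and fST: "f ` S \<subseteq> T"
  shows "csum S T f h \<Longrightarrow> (\<forall>x\<in>S. h differentiable (at x)) \<and>
         (\<forall>v. \<exists>h'. csum S T f h' \<and> (\<forall>x\<in>S. frechet_derivative h (at x) v = h' x))"
proof (induction rule: csum.induct)
  case csum0
  have fd: "frechet_derivative (\<lambda>x::'a. 0::'b) (at x) = (\<lambda>v. 0)" for x
    using frechet_derivative_at[OF has_derivative_const[of 0 "at x"]] by simp
  show ?case using fd by (auto intro: csum.csum0)
next
  case (csumI s g h)
  let ?fd = "\<lambda>F x. frechet_derivative F (at x)"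
  have gfd: "((\<lambda>x. g (f x)) has_derivative (\<lambda>v. ?fd g (f x) (?fd f x v))) (at x)" if "x \<in> S" for x
    using has_derivative_compose[OF smooth_on_hasderiv[OF f that] smooth_on_hasderiv[OF csumI(2)]] fST that
    by auto
  have hd: "((\<lambda>x. s x *\<^sub>R g (f x) + h x) has_derivative
      (\<lambda>v. s x *\<^sub>R ?fd g (f x) (?fd f x v) + ?fd s x v *\<^sub>R g (f x) + ?fd h x v)) (at x)" if "x \<in> S" for x
    using has_derivative_scaleR[OF smooth_on_hasderiv[OF csumI(1) that] gfd[OF that]]
      csumI(4) that frechet_derivative_works
    by (intro has_derivative_add) auto
  have lin: "linear (?fd g y)" if "y \<in> T" for y
    using smooth_on_hasderiv[OF csumI(2) that] has_derivative_linear by blast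
  have expand: "?fd g y w = (\<Sum>b\<in>Basis. (w \<bullet> b) *\<^sub>R ?fd g y b)" if "y \<in> T" for y w
  proof -
    have "?fd g y w = ?fd g y (\<Sum>b\<in>Basis. (w \<bullet> b) *\<^sub>R b)" by (simp add: euclidean_representation)
    also have "\<dots> = (\<Sum>b\<in>Basis. (w \<bullet> b) *\<^sub>R ?fd g y b)"
      using lin[OF that] by (simp add: linear_sum linear_scale)
    finally show ?thesis .
  qed
  show ?case
  proof (intro conjI ballI allI)
    show "(\<lambda>x. s x *\<^sub>R g (f x) + h x) differentiable at x" if "x \<in> S" for x
      using hd[OF that] differentiable_def by blast
    fix v
    obtain h' where h': "csum S T f h'" "\<forall>x\<in>S. frechet_derivative h (at x) v = h' x"
      using csumI(4) by blast
    have sm1: "smooth_on S (\<lambda>x. s x * (?fd f x v \<bullet> b))" for b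
      by (intro smooth_on_mult S csumI smooth_on_linear_comp[OF S _ smooth_on_deriv[OF f]] bounded_linear_inner_left)
    have "csum S T f (\<lambda>x. ?fd s x v *\<^sub>R g (f x) + h' x)"
      by (intro csum.csumI h' smooth_on_deriv csumI)
    from csum_sum[OF finite_Basis this, of "\<lambda>b x. s x * (?fd f x v \<bullet> b)" "\<lambda>b y. ?fd g y b"]
    have c: "csum S T f (\<lambda>x. (\<Sum>b\<in>Basis. (s x * (?fd f x v \<bullet> b)) *\<^sub>R ?fd g (f x) b) + (?fd s x v *\<^sub>R g (f x) + h' x))"
      using sm1 smooth_on_deriv[OF csumI(2)] by blast
    have "frechet_derivative (\<lambda>x. s x *\<^sub>R g (f x) + h x) (at x) v =
       (\<Sum>b\<in>Basis. (s x * (?fd f x v \<bullet> b)) *\<^sub>R ?fd g (f x) b) + (?fd s x v *\<^sub>R g (f x) + h' x)"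
      if "x \<in> S" for x
    proof -
      have "f x \<in> T" using fST that by blast
      then have "s x *\<^sub>R ?fd g (f x) (?fd f x v) = (\<Sum>b\<in>Basis. (s x * (?fd f x v \<bullet> b)) *\<^sub>R ?fd g (f x) b)"
        by (subst expand) (auto simp: scaleR_sum_right)
      then show ?thesis
        using sym[OF frechet_derivative_at[OF hd[OF that]]] h'(2) that by (simp add: add.assoc)
    qed
    with c show "\<exists>h'. csum S T f h' \<and> (\<forall>x\<in>S. frechet_derivative (\<lambda>x. s x *\<^sub>R g (f x) + h x) (at x) v = h' x)"
      by blast
  qed
qed

lemma smooth_on_compose:
  fixes S :: "'a::real_normed_vector set" and T :: "'c::euclidean_space set" and f :: "'a \<Rightarrow> 'c"
    and g :: "'c \<Rightarrow> 'b::real_normed_vector"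
  assumes S: "open S" and T: "open T" and f: "smooth_on S f" and fST: "f ` S \<subseteq> T" and g: "smooth_on T g"
  shows "smooth_on S (\<lambda>x. g (f x))"
proof -
  have "csum S T f (\<lambda>x. (\<lambda>x. 1) x *\<^sub>R g (f x) + (\<lambda>x. 0) x)"
    by (intro csum.intros smooth_on_const S g)
  then have "csum S T f (\<lambda>x. g (f x))" by simp
  then show ?thesis
    by (rule smooth_coinduct_open[OF S, where P="csum S T f"]) (use csum_step[OF S T f fST] in blast)
qed



definition hdr :: "nat \<Rightarrow> (real \<Rightarrow> real) \<Rightarrow> real \<Rightarrow> real" where
  "hdr k \<psi> = (deriv ^^ k) \<psi>"

lemma hdr_0[simp]: "hdr 0 \<psi> = \<psi>" by (simp add: hdr_def)
lemma hdr_Suc: "hdr (Suc k) \<psi> = deriv (hdr k \<psi>)" by (simp add: hdr_def)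

lemma smooth_real_deriv:
  assumes "smooth_on UNIV (\<psi>::real\<Rightarrow>real)"
  shows "(\<psi> has_real_derivative deriv \<psi> x) (at x)" and "smooth_on UNIV (deriv \<psi>)"
proof -
  have fd: "(\<psi> has_real_derivative frechet_derivative \<psi> (at y) 1) (at y)" for y
  proof -
    have hdr: "(\<psi> has_derivative frechet_derivative \<psi> (at y)) (at y)"
      using smooth_on_hasderiv[OF assms] by blast
    have "linear (frechet_derivative \<psi> (at y))" using hdr has_derivative_linear by blast
    then have "frechet_derivative \<psi> (at y) h = h * frechet_derivative \<psi> (at y) 1" for h
      by (metis linear_scale mult.right_neutral real_scaleR_def)
    then show ?thesis using has_derivative_imp_has_field_derivative[OF hdr] by metis
  qed
  then have eq: "deriv \<psi> = (\<lambda>y. frechet_derivative \<psi> (at y) 1)"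
    using DERIV_imp_deriv by blast
  show "(\<psi> has_real_derivative deriv \<psi> x) (at x)" using fd eq by simp
  show "smooth_on UNIV (deriv \<psi>)" unfolding eq using smooth_on_deriv[OF assms] .
qed

lemma smooth_hdr:
  assumes "smooth_on UNIV (\<psi>::real\<Rightarrow>real)"
  shows "smooth_on UNIV (hdr k \<psi>)" and "(hdr k \<psi> has_real_derivative hdr (Suc k) \<psi> x) (at x)"
proof -
  show s: "smooth_on UNIV (hdr k \<psi>)" for k
    by (induction k) (use assms smooth_real_deriv in \<open>auto simp: hdr_Suc\<close>)
  show "(hdr k \<psi> has_real_derivative hdr (Suc k) \<psi> x) (at x)"
    using smooth_real_deriv(1)[OF s] by (simp add: hdr_Suc)
qed

lemma chain_smooth:
  fixes \<theta> :: "nat \<Rightarrow> real \<Rightarrow> real"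
  assumes ch: "\<And>k x. (\<theta> k has_real_derivative \<theta> (Suc k) x) (at x)"
  shows "smooth_on UNIV (\<theta> 0)" and "hdr k (\<theta> 0) = \<theta> k"
proof -
  show "hdr k (\<theta> 0) = \<theta> k"
  proof (induction k)
    case (Suc k)
    have "deriv (\<theta> k) = \<theta> (Suc k)" by (rule ext, rule DERIV_imp_deriv[OF ch])
    then show ?case using Suc by (simp add: hdr_Suc)
  qed simp
  show "smooth_on UNIV (\<theta> 0)"
  proof (rule smooth_coinduct_open[where P="\<lambda>h. \<exists>k c. h = (\<lambda>x. c * \<theta> k x)"])
    fix h assume "\<exists>k c. h = (\<lambda>x. c * \<theta> k x)"
    then obtain k c where h: "h = (\<lambda>x. c * \<theta> k x)" by blast
    have d: "(h has_derivative (\<lambda>v. v * (c * \<theta> (Suc k) x))) (at x)" for x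
    proof -
      have e: "(\<lambda>v. v * (c * \<theta> (Suc k) x)) = (*) (c * \<theta> (Suc k) x)" by (auto simp: fun_eq_iff)
      show ?thesis
        using DERIV_cmult[OF ch[of k x], of c] unfolding h has_field_derivative_def e .
    qed
    show "(\<forall>x\<in>UNIV. h differentiable at x) \<and> (\<forall>v. \<exists>h'. (\<exists>k c. h' = (\<lambda>x. c * \<theta> k x)) \<and> (\<forall>x\<in>UNIV. frechet_derivative h (at x) v = h' x))"
    proof (intro conjI allI ballI)
      show "h differentiable at x" for x using d differentiable_def by blast
      fix v
      show "\<exists>h'. (\<exists>k c. h' = (\<lambda>x. c * \<theta> k x)) \<and> (\<forall>x\<in>UNIV. frechet_derivative h (at x) v = h' x)"
        using frechet_derivative_at[OF d]
        by (intro exI[of _ "\<lambda>x. (v * c) * \<theta> (Suc k) x"] conjI) (auto, metis mult.assoc)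
    qed
  next
    show "\<exists>k c. \<theta> 0 = (\<lambda>x. c * \<theta> k x)" by (rule exI[of _ 0], rule exI[of _ 1]) simp
  qed simp
qed

lemma hdr_lin:
  fixes \<psi> \<phi> :: "real \<Rightarrow> real" and a b :: real
  assumes "smooth_on UNIV \<psi>" "smooth_on UNIV \<phi>"
  shows "hdr k (\<lambda>x. a * \<psi> x + b * \<phi> x) = (\<lambda>x. a * hdr k \<psi> x + b * hdr k \<phi> x)"
proof -
  let ?\<theta> = "\<lambda>k x. a * hdr k \<psi> x + b * hdr k \<phi> x"
  have "(?\<theta> k has_real_derivative ?\<theta> (Suc k) x) (at x)" for k x
    using smooth_hdr(2)[OF assms(1)] smooth_hdr(2)[OF assms(2)]
    by (intro derivative_eq_intros) auto
  from chain_smooth(2)[of ?\<theta>, OF this] show ?thesis by simp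
qed

lemma smooth_lin:
  fixes \<psi> \<phi> :: "real \<Rightarrow> real" and a b :: real
  assumes "smooth_on UNIV \<psi>" "smooth_on UNIV \<phi>"
  shows "smooth_on UNIV (\<lambda>x::real. a * \<psi> x + b * \<phi> x)"
proof -
  have c: "smooth_on UNIV (\<lambda>x::real. c::real)" for c by (rule smooth_on_const) simp
  show ?thesis
    using smooth_on_add[OF open_UNIV smooth_on_mult[OF open_UNIV c[of a] assms(1)]
      smooth_on_mult[OF open_UNIV c[of b] assms(2)]] .
qed


definition sn :: "nat \<Rightarrow> nat \<Rightarrow> (real \<Rightarrow> real) \<Rightarrow> real" where
  "sn k m \<psi> = (SUP y\<in>{-real m..real m}. \<bar>hdr k \<psi> y\<bar>)"

definition pn :: "nat \<Rightarrow> (real \<Rightarrow> real) \<Rightarrow> real" where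
  "pn m \<psi> = (\<Sum>k\<le>m. sn k m \<psi>)"

lemma sn_ge:
  assumes "smooth_on UNIV \<psi>" "\<bar>y\<bar> \<le> real m"
  shows "\<bar>hdr k \<psi> y\<bar> \<le> sn k m \<psi>"
proof -
  have "continuous_on {-real m..real m} (\<lambda>y. \<bar>hdr k \<psi> y\<bar>)"
    using smooth_on_cont[OF smooth_hdr(1)[OF assms(1)]]
    by (intro continuous_intros) (auto intro: continuous_on_subset)
  then have "bdd_above ((\<lambda>y. \<bar>hdr k \<psi> y\<bar>) ` {-real m..real m})"
    by (intro bounded_imp_bdd_above compact_imp_bounded compact_continuous_image) auto
  then show ?thesis unfolding sn_def
    by (rule cSUP_upper[rotated]) (use assms(2) in auto)
qed

lemma sn_le:
  assumes "\<And>y. \<bar>y\<bar> \<le> real m \<Longrightarrow> \<bar>hdr k \<psi> y\<bar> \<le> B"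
  shows "sn k m \<psi> \<le> B"
  unfolding sn_def using assms by (intro cSUP_least) auto

lemma sn_nonneg: "smooth_on UNIV \<psi> \<Longrightarrow> 0 \<le> sn k m \<psi>"
  using sn_ge[of \<psi> 0 m k] by auto

lemma pn_nonneg: "smooth_on UNIV \<psi> \<Longrightarrow> 0 \<le> pn m \<psi>"
  unfolding pn_def by (intro sum_nonneg sn_nonneg)

lemma pn_ge:
  assumes "smooth_on UNIV \<psi>" "k \<le> m" "\<bar>y\<bar> \<le> real m"
  shows "\<bar>hdr k \<psi> y\<bar> \<le> pn m \<psi>"
proof -
  have "\<bar>hdr k \<psi> y\<bar> \<le> sn k m \<psi>" by (rule sn_ge[OF assms(1,3)])
  also have "\<dots> \<le> pn m \<psi>" unfolding pn_def
    by (rule member_le_sum) (use assms sn_nonneg in auto)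
  finally show ?thesis .
qed

lemma pn_mono:
  assumes "smooth_on UNIV \<psi>" "m \<le> m'"
  shows "pn m \<psi> \<le> pn m' \<psi>"
proof -
  have "pn m \<psi> \<le> (\<Sum>k\<le>m. sn k m' \<psi>)" unfolding pn_def
    by (intro sum_mono sn_le sn_ge[OF assms(1)]) (use assms(2) in auto)
  also have "\<dots> \<le> pn m' \<psi>" unfolding pn_def
    by (intro sum_mono2) (use assms sn_nonneg in auto)
  finally show ?thesis .
qed

lemma pn_lin:
  fixes \<psi> \<phi> :: "real \<Rightarrow> real" and a b :: real
  assumes "smooth_on UNIV \<psi>" "smooth_on UNIV \<phi>"
  shows "pn m (\<lambda>x. a * \<psi> x + b * \<phi> x) \<le> \<bar>a\<bar> * pn m \<psi> + \<bar>b\<bar> * pn m \<phi>"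
proof -
  have "sn k m (\<lambda>x. a * \<psi> x + b * \<phi> x) \<le> \<bar>a\<bar> * sn k m \<psi> + \<bar>b\<bar> * sn k m \<phi>" for k
  proof (rule sn_le)
    fix y assume y: "\<bar>y\<bar> \<le> real m"
    have "\<bar>hdr k (\<lambda>x. a * \<psi> x + b * \<phi> x) y\<bar> = \<bar>a * hdr k \<psi> y + b * hdr k \<phi> y\<bar>"
      by (simp add: hdr_lin[OF assms])
    also have "\<dots> \<le> \<bar>a\<bar> * \<bar>hdr k \<psi> y\<bar> + \<bar>b\<bar> * \<bar>hdr k \<phi> y\<bar>"
      by (metis abs_mult abs_triangle_ineq)
    also have "\<dots> \<le> \<bar>a\<bar> * sn k m \<psi> + \<bar>b\<bar> * sn k m \<phi>"
      by (intro add_mono mult_left_mono sn_ge assms y) auto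
    finally show "\<bar>hdr k (\<lambda>x. a * \<psi> x + b * \<phi> x) y\<bar> \<le> \<bar>a\<bar> * sn k m \<psi> + \<bar>b\<bar> * sn k m \<phi>" .
  qed
  note h = this
  have "(\<Sum>k\<le>m. sn k m (\<lambda>x. a * \<psi> x + b * \<phi> x)) \<le> (\<Sum>k\<le>m. \<bar>a\<bar> * sn k m \<psi> + \<bar>b\<bar> * sn k m \<phi>)"
    by (rule sum_mono, rule h)
  then show ?thesis by (simp add: pn_def sum.distrib sum_distrib_left)
qed

lemma hdr_neg:
  fixes \<psi> :: "real \<Rightarrow> real"
  assumes "smooth_on UNIV \<psi>"
  shows "hdr k (\<lambda>x. - \<psi> x) = (\<lambda>x. - hdr k \<psi> x)"
  using hdr_lin[OF assms assms, of k "-1" 0] by simp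

lemma pn_neg:
  fixes \<psi> :: "real \<Rightarrow> real"
  assumes "smooth_on UNIV \<psi>"
  shows "pn m (\<lambda>x. - \<psi> x) = pn m \<psi>"
  unfolding pn_def sn_def hdr_neg[OF assms] by simp

lemma smooth_diff_real:
  fixes \<psi> \<phi> :: "real \<Rightarrow> real"
  shows "smooth_on UNIV \<psi> \<Longrightarrow> smooth_on UNIV \<phi> \<Longrightarrow> smooth_on UNIV (\<lambda>x. \<psi> x - \<phi> x)"
  using smooth_lin[of \<psi> \<phi> 1 "-1"] by simp

lemma pn_diff_commute:
  fixes \<psi> \<phi> :: "real \<Rightarrow> real"
  assumes "smooth_on UNIV \<psi>" "smooth_on UNIV \<phi>"
  shows "pn m (\<lambda>x. \<psi> x - \<phi> x) = pn m (\<lambda>x. \<phi> x - \<psi> x)"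
  using pn_neg[OF smooth_diff_real[OF assms], of m] by simp

lemma pn_triangle:
  fixes \<psi> \<phi> \<eta> :: "real \<Rightarrow> real"
  assumes "smooth_on UNIV \<psi>" "smooth_on UNIV \<phi>" "smooth_on UNIV \<eta>"
  shows "pn m (\<lambda>x. \<psi> x - \<eta> x) \<le> pn m (\<lambda>x. \<psi> x - \<phi> x) + pn m (\<lambda>x. \<phi> x - \<eta> x)"
  using pn_lin[OF smooth_diff_real[OF assms(1,2)] smooth_diff_real[OF assms(2,3)], of m 1 1] by simp



definition Xs :: "(real \<Rightarrow> real) set" where "Xs = {\<psi>. smooth_on UNIV \<psi>}"

definition tm :: "(real \<Rightarrow> real) \<Rightarrow> (real \<Rightarrow> real) \<Rightarrow> nat \<Rightarrow> real" where
  "tm \<psi> \<phi> m = (1/2)^Suc m * min 1 (pn m (\<lambda>x. \<psi> x - \<phi> x))"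

definition fdist :: "(real \<Rightarrow> real) \<Rightarrow> (real \<Rightarrow> real) \<Rightarrow> real" where
  "fdist \<psi> \<phi> = (if \<psi> \<in> Xs \<and> \<phi> \<in> Xs then suminf (tm \<psi> \<phi>) else 0)"

lemma tm_bounds:
  assumes "\<psi> \<in> Xs" "\<phi> \<in> Xs"
  shows "0 \<le> tm \<psi> \<phi> m" "tm \<psi> \<phi> m \<le> (1/2)^Suc m"
  using pn_nonneg[OF smooth_diff_real, of \<psi> \<phi> m] assms unfolding tm_def Xs_def by auto

lemma tm_summable: "\<psi> \<in> Xs \<Longrightarrow> \<phi> \<in> Xs \<Longrightarrow> summable (tm \<psi> \<phi>)"
  by (rule summable_comparison_test[OF _ sums_summable[OF power_half_series]]) (use tm_bounds in auto)

lemma fdist_nonneg: "0 \<le> fdist \<psi> \<phi>"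
  unfolding fdist_def using tm_bounds tm_summable by (auto intro: suminf_nonneg)

lemma fdist_commute: "fdist \<psi> \<phi> = fdist \<phi> \<psi>"
proof (cases "\<psi> \<in> Xs \<and> \<phi> \<in> Xs")
  case True
  then have "tm \<psi> \<phi> = tm \<phi> \<psi>" unfolding tm_def
    using pn_diff_commute[of \<psi> \<phi>] by (simp add: Xs_def fun_eq_iff)
  then show ?thesis unfolding fdist_def by auto
qed (auto simp: fdist_def)

lemma hdr_zero: "hdr k (\<lambda>x. 0) = (\<lambda>x. 0)"
  using chain_smooth(2)[of "\<lambda>k x. 0" k] by simp

lemma pn_zero: "pn m (\<lambda>x. 0) = 0"
  unfolding pn_def sn_def hdr_zero by simp

lemma tm_single: "\<psi> \<in> Xs \<Longrightarrow> \<phi> \<in> Xs \<Longrightarrow> tm \<psi> \<phi> m \<le> fdist \<psi> \<phi>"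
proof -
  assume a: "\<psi> \<in> Xs" "\<phi> \<in> Xs"
  have "sum (tm \<psi> \<phi>) {m} \<le> suminf (tm \<psi> \<phi>)"
    by (rule sum_le_suminf) (use a tm_summable tm_bounds in auto)
  then show ?thesis using a by (simp add: fdist_def)
qed

lemma fdist_zero:
  assumes "\<psi> \<in> Xs" "\<phi> \<in> Xs"
  shows "fdist \<psi> \<phi> = 0 \<longleftrightarrow> \<psi> = \<phi>"
proof
  assume "\<psi> = \<phi>"
  then show "fdist \<psi> \<phi> = 0" unfolding fdist_def tm_def by (simp add: pn_zero)
next
  assume z: "fdist \<psi> \<phi> = 0"
  show "\<psi> = \<phi>"
  proof
    fix y
    obtain m :: nat where m: "\<bar>y\<bar> \<le> real m" using real_arch_simple by blast
    have "tm \<psi> \<phi> m \<le> 0" using tm_single[OF assms, of m] z by simp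
    moreover have pos: "(0::real) < (1/2)^Suc m" by simp
    ultimately have "min 1 (pn m (\<lambda>x. \<psi> x - \<phi> x)) \<le> 0" unfolding tm_def
      by (metis mult_pos_pos not_le)
    then have "pn m (\<lambda>x. \<psi> x - \<phi> x) \<le> 0" by linarith
    moreover have "\<bar>hdr 0 (\<lambda>x. \<psi> x - \<phi> x) y\<bar> \<le> pn m (\<lambda>x. \<psi> x - \<phi> x)"
      by (rule pn_ge) (use assms smooth_diff_real m in \<open>auto simp: Xs_def\<close>)
    ultimately show "\<psi> y = \<phi> y" by simp
  qed
qed

lemma fdist_triangle:
  assumes "\<psi> \<in> Xs" "\<phi> \<in> Xs" "\<eta> \<in> Xs"
  shows "fdist \<psi> \<eta> \<le> fdist \<psi> \<phi> + fdist \<phi> \<eta>"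
proof -
  have "tm \<psi> \<eta> m \<le> tm \<psi> \<phi> m + tm \<phi> \<eta> m" for m
  proof -
    have "pn m (\<lambda>x. \<psi> x - \<eta> x) \<le> pn m (\<lambda>x. \<psi> x - \<phi> x) + pn m (\<lambda>x. \<phi> x - \<eta> x)"
      using pn_triangle assms by (auto simp: Xs_def)
    moreover have "0 \<le> pn m (\<lambda>x. \<psi> x - \<phi> x)" "0 \<le> pn m (\<lambda>x. \<phi> x - \<eta> x)"
      using pn_nonneg smooth_diff_real assms by (auto simp: Xs_def)
    ultimately have "min 1 (pn m (\<lambda>x. \<psi> x - \<eta> x)) \<le> min 1 (pn m (\<lambda>x. \<psi> x - \<phi> x)) + min 1 (pn m (\<lambda>x. \<phi> x - \<eta> x))"
      by linarith
    then show ?thesis unfolding tm_def by (simp add: distrib_left[symmetric])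
  qed
  then have "suminf (tm \<psi> \<eta>) \<le> (\<Sum>m. tm \<psi> \<phi> m + tm \<phi> \<eta> m)"
    by (intro suminf_le summable_add tm_summable assms)
  also have "\<dots> = suminf (tm \<psi> \<phi>) + suminf (tm \<phi> \<eta>)"
    by (intro suminf_add[symmetric] tm_summable assms)
  finally show ?thesis using assms by (simp add: fdist_def)
qed

interpretation FM: Metric_space Xs fdist
  by unfold_locales (auto simp: fdist_nonneg fdist_commute fdist_zero intro: fdist_triangle)

lemma fdist_lower:
  assumes "\<psi> \<in> Xs" "\<phi> \<in> Xs"
  shows "(1/2)^Suc m * min 1 (pn m (\<lambda>x. \<psi> x - \<phi> x)) \<le> fdist \<psi> \<phi>"
  using tm_single[OF assms] unfolding tm_def .

lemma fdist_upper:
  assumes "\<psi> \<in> Xs" "\<phi> \<in> Xs"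
  shows "fdist \<psi> \<phi> \<le> pn m (\<lambda>x. \<psi> x - \<phi> x) + (1/2)^m"
proof -
  let ?t = "tm \<psi> \<phi>" and ?p = "pn m (\<lambda>x. \<psi> x - \<phi> x)"
  have s: "summable ?t" using tm_summable assms .
  have p0: "0 \<le> ?p" using pn_nonneg smooth_diff_real assms by (auto simp: Xs_def)
  have split: "suminf ?t = sum ?t {..<m} + (\<Sum>n. ?t (n + m))"
    using suminf_minus_initial_segment[OF s, of m] by simp
  have "sum ?t {..<m} \<le> (\<Sum>n<m. (1/2)^Suc n * ?p)"
  proof (rule sum_mono)
    fix n assume "n \<in> {..<m}"
    then have "pn n (\<lambda>x. \<psi> x - \<phi> x) \<le> ?p"
      using pn_mono smooth_diff_real assms by (auto simp: Xs_def)
    then show "?t n \<le> (1/2)^Suc n * ?p" unfolding tm_def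
      by (intro mult_left_mono) auto
  qed
  also have "\<dots> = (\<Sum>n<m. (1/2::real)^Suc n) * ?p" by (simp add: sum_distrib_right)
  also have "\<dots> \<le> 1 * ?p"
  proof (rule mult_right_mono[OF _ p0])
    have "(\<Sum>n<m. (1/2::real)^Suc n) \<le> (\<Sum>n. (1/2::real)^Suc n)"
      by (rule sum_le_suminf) (use sums_summable[OF power_half_series] in auto)
    then show "(\<Sum>n<m. (1/2::real)^Suc n) \<le> 1" using sums_unique[OF power_half_series] by simp
  qed
  finally have A: "sum ?t {..<m} \<le> ?p" by simp
  have g: "(\<lambda>n. (1/2)^m * (1/2::real)^Suc n) sums ((1/2)^m * 1)"
    by (rule sums_mult[OF power_half_series])
  have "(\<Sum>n. ?t (n + m)) \<le> (\<Sum>n. (1/2)^m * (1/2::real)^Suc n)"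
  proof (rule suminf_le)
    show "?t (n + m) \<le> (1/2)^m * (1/2::real)^Suc n" for n
      using tm_bounds(2)[OF assms, of "n+m"] by (simp add: power_add mult.commute)
    show "summable (\<lambda>n. ?t (n + m))" using s by (simp add: summable_iff_shift)
    show "summable (\<lambda>n. (1/2)^m * (1/2::real)^Suc n)" using g sums_summable by blast
  qed
  also have "\<dots> = (1/2)^m" using sums_unique[OF g] by simp
  finally show ?thesis using A split assms by (simp add: fdist_def)
qed



lemma hdr_diff:
  fixes \<psi> \<phi> :: "real \<Rightarrow> real"
  assumes "smooth_on UNIV \<psi>" "smooth_on UNIV \<phi>"
  shows "hdr k (\<lambda>x. \<psi> x - \<phi> x) = (\<lambda>x. hdr k \<psi> x - hdr k \<phi> x)"
  using hdr_lin[OF assms, of k 1 "-1"] by simp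

lemma small_pn:
  assumes "\<psi> \<in> Xs" "\<phi> \<in> Xs" "fdist \<psi> \<phi> < (1/2)^Suc M * min 1 \<epsilon>" "\<epsilon> > 0"
  shows "pn M (\<lambda>x. \<psi> x - \<phi> x) < \<epsilon>"
proof -
  have "(1/2)^Suc M * min 1 (pn M (\<lambda>x. \<psi> x - \<phi> x)) < (1/2)^Suc M * min 1 \<epsilon>"
    using fdist_lower[OF assms(1,2), of M] assms(3) by linarith
  then have "min 1 (pn M (\<lambda>x. \<psi> x - \<phi> x)) < min 1 \<epsilon>" by simp
  then show ?thesis by linarith
qed

lemma FM_mcomplete: "FM.mcomplete"
  unfolding FM.mcomplete_def
proof (intro allI impI)
  fix \<sigma> assume "FM.MCauchy \<sigma>"
  then have inX: "\<And>n. \<sigma> n \<in> Xs" and cau: "\<And>\<epsilon>. \<epsilon> > 0 \<Longrightarrow> \<exists>N. \<forall>n n'. N \<le> n \<longrightarrow> N \<le> n' \<longrightarrow> fdist (\<sigma> n) (\<sigma> n') < \<epsilon>"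
    unfolding FM.MCauchy_def by auto
  have sm: "\<And>n. smooth_on UNIV (\<sigma> n)" using inX by (auto simp: Xs_def)
  have UC: "\<exists>N. \<forall>n\<ge>N. \<forall>n'\<ge>N. \<forall>y. \<bar>y\<bar> \<le> real m \<longrightarrow> \<bar>hdr k (\<sigma> n) y - hdr k (\<sigma> n') y\<bar> < \<epsilon>"
    if "\<epsilon> > 0" for k m \<epsilon>
  proof -
    note ep = that
    define M where "M = max k m"
    obtain N where N: "\<forall>n n'. N \<le> n \<longrightarrow> N \<le> n' \<longrightarrow> fdist (\<sigma> n) (\<sigma> n') < (1/2)^Suc M * min 1 \<epsilon>"
    proof -
      have pos: "0 < (1/2::real)^Suc M * min 1 \<epsilon>" using ep by simp
      show ?thesis using cau[OF pos] that by blast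
    qed
    have "\<bar>hdr k (\<sigma> n) y - hdr k (\<sigma> n') y\<bar> < \<epsilon>" if "n \<ge> N" "n' \<ge> N" "\<bar>y\<bar> \<le> real m" for n n' y
    proof -
      have "\<bar>hdr k (\<lambda>x. \<sigma> n x - \<sigma> n' x) y\<bar> \<le> pn M (\<lambda>x. \<sigma> n x - \<sigma> n' x)"
        by (rule pn_ge) (use smooth_diff_real sm that in \<open>auto simp: M_def\<close>)
      also have "\<dots> < \<epsilon>" using small_pn[OF inX inX N[rule_format, OF that(1,2)] \<open>\<epsilon>>0\<close>] .
      finally show ?thesis by (simp add: hdr_diff[OF sm sm])
    qed
    then show ?thesis by blast
  qed
  define \<theta> where "\<theta> k y = lim (\<lambda>n. hdr k (\<sigma> n) y)" for k y
  have conv: "(\<lambda>n. hdr k (\<sigma> n) y) \<longlonglongrightarrow> \<theta> k y" for k y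
  proof -
    obtain m :: nat where m: "\<bar>y\<bar> \<le> real m" using real_arch_simple by blast
    have "Cauchy (\<lambda>n. hdr k (\<sigma> n) y)"
      unfolding Cauchy_def dist_real_def
    proof (intro allI impI)
      fix e :: real assume "e > 0"
      from UC[where k=k and m=m, OF this] obtain N where
        "\<forall>n\<ge>N. \<forall>n'\<ge>N. \<forall>y. \<bar>y\<bar> \<le> real m \<longrightarrow> \<bar>hdr k (\<sigma> n) y - hdr k (\<sigma> n') y\<bar> < e" by blast
      then show "\<exists>M. \<forall>n\<ge>M. \<forall>n'\<ge>M. \<bar>hdr k (\<sigma> n) y - hdr k (\<sigma> n') y\<bar> < e" using m by blast
    qed
    then have "convergent (\<lambda>n. hdr k (\<sigma> n) y)" by (rule Cauchy_convergent)
    then show ?thesis unfolding \<theta>_def by (simp add: convergent_LIMSEQ_iff)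
  qed
  have unif: "\<exists>N. \<forall>n\<ge>N. \<forall>y. \<bar>y\<bar> \<le> real m \<longrightarrow> \<bar>hdr k (\<sigma> n) y - \<theta> k y\<bar> \<le> \<epsilon>"
    if "\<epsilon> > 0" for k m \<epsilon>
  proof -
    note ep = that
    obtain N where N: "\<forall>n\<ge>N. \<forall>n'\<ge>N. \<forall>y. \<bar>y\<bar> \<le> real m \<longrightarrow> \<bar>hdr k (\<sigma> n) y - hdr k (\<sigma> n') y\<bar> < \<epsilon>"
      using UC[where k=k and m=m, OF ep] by blast
    have "\<bar>hdr k (\<sigma> n) y - \<theta> k y\<bar> \<le> \<epsilon>" if "n \<ge> N" "\<bar>y\<bar> \<le> real m" for n y
    proof (rule Lim_bounded)
      show "(\<lambda>n'. \<bar>hdr k (\<sigma> n) y - hdr k (\<sigma> n') y\<bar>) \<longlonglongrightarrow> \<bar>hdr k (\<sigma> n) y - \<theta> k y\<bar>"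
        by (intro tendsto_intros conv)
      show "\<forall>n'\<ge>N. \<bar>hdr k (\<sigma> n) y - hdr k (\<sigma> n') y\<bar> \<le> \<epsilon>"
        using N that by (auto intro: less_imp_le)
    qed
    then show ?thesis by blast
  qed
  have der: "(\<theta> k has_real_derivative \<theta> (Suc k) x) (at x)" for k x
  proof -
    obtain m :: nat where m: "\<bar>x\<bar> < real m" using reals_Archimedean2 by blast
    define S where "S = {- real m<..<real m}"
    have S: "open S" "convex S" "x \<in> S" using m by (auto simp: S_def)
    have "\<exists>g. \<forall>y\<in>S. (\<lambda>n. hdr k (\<sigma> n) y) \<longlonglongrightarrow> g y \<and> (g has_derivative (*) (\<theta> (Suc k) y)) (at y within S)"
    proof (rule has_derivative_sequence[OF S(2) _ _ S(3) conv, where f'="\<lambda>n y. (*) (hdr (Suc k) (\<sigma> n) y)"])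
      show "(hdr k (\<sigma> n) has_derivative (*) (hdr (Suc k) (\<sigma> n) y)) (at y within S)" if "y \<in> S" for n y
        using smooth_hdr(2)[OF sm, of k n y] unfolding has_field_derivative_def
        by (rule has_derivative_at_withinI)
      fix e :: real assume e: "0 < e"
      obtain N where N: "\<forall>n\<ge>N. \<forall>y. \<bar>y\<bar> \<le> real m \<longrightarrow> \<bar>hdr (Suc k) (\<sigma> n) y - \<theta> (Suc k) y\<bar> \<le> e"
        using unif[where k="Suc k" and m=m, OF e] by blast
      have "\<forall>y\<in>S. \<forall>h. norm (hdr (Suc k) (\<sigma> n) y * h - \<theta> (Suc k) y * h) \<le> e * norm h" if "n \<ge> N" for n
      proof (intro ballI allI)
        fix y h assume "y \<in> S"
        then have "\<bar>y\<bar> \<le> real m" by (auto simp: S_def)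
        then have "\<bar>hdr (Suc k) (\<sigma> n) y - \<theta> (Suc k) y\<bar> \<le> e" using N that by blast
        then have "\<bar>hdr (Suc k) (\<sigma> n) y - \<theta> (Suc k) y\<bar> * \<bar>h\<bar> \<le> e * \<bar>h\<bar>"
          by (intro mult_right_mono) auto
        then show "norm (hdr (Suc k) (\<sigma> n) y * h - \<theta> (Suc k) y * h) \<le> e * norm h"
          by (simp add: left_diff_distrib[symmetric] abs_mult)
      qed
      then show "\<forall>\<^sub>F n in sequentially. \<forall>y\<in>S. \<forall>h. norm (hdr (Suc k) (\<sigma> n) y * h - \<theta> (Suc k) y * h) \<le> e * norm h"
        unfolding eventually_sequentially by blast
    qed
    then obtain g where g: "\<forall>y\<in>S. (\<lambda>n. hdr k (\<sigma> n) y) \<longlonglongrightarrow> g y \<and> (g has_derivative (*) (\<theta> (Suc k) y)) (at y within S)"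
      by blast
    have eq: "g y = \<theta> k y" if "y \<in> S" for y
    proof -
      have "(\<lambda>n. hdr k (\<sigma> n) y) \<longlonglongrightarrow> g y" using g that by blast
      from LIMSEQ_unique[OF this conv] show ?thesis .
    qed
    have "(g has_derivative (*) (\<theta> (Suc k) x)) (at x within S)"
      using g S(3) by blast
    then have "(g has_derivative (*) (\<theta> (Suc k) x)) (at x)"
      by (simp add: at_within_open[OF S(3) S(1)])
    then have "(\<theta> k has_derivative (*) (\<theta> (Suc k) x)) (at x)"
      by (rule has_derivative_transform_within_open[OF _ S(1) S(3)]) (use eq in auto)
    then show ?thesis unfolding has_field_derivative_def .
  qed
  have \<psi>X: "\<theta> 0 \<in> Xs" using chain_smooth(1)[of \<theta>, OF der] by (simp add: Xs_def)
  have hd\<psi>: "hdr k (\<theta> 0) = \<theta> k" for k using chain_smooth(2)[of \<theta>, OF der] .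
  have "limitin FM.mtopology \<sigma> (\<theta> 0) sequentially"
    unfolding FM.limit_metric_sequentially
  proof (intro conjI allI impI \<psi>X)
    fix \<epsilon> :: real assume \<epsilon>: "\<epsilon> > 0"
    obtain m where m: "(1/2::real)^m < \<epsilon>/2" using real_arch_pow_inv[of "\<epsilon>/2" "1/2"] \<epsilon> by auto
    define e where "e = \<epsilon> / (4 * (real m + 1))"
    have e: "e > 0" using \<epsilon> by (simp add: e_def)
    have "\<forall>k\<in>{..m}. \<forall>\<^sub>F n in sequentially. \<forall>y. \<bar>y\<bar> \<le> real m \<longrightarrow> \<bar>hdr k (\<sigma> n) y - \<theta> k y\<bar> \<le> e"
    proof
      fix k show "\<forall>\<^sub>F n in sequentially. \<forall>y. \<bar>y\<bar> \<le> real m \<longrightarrow> \<bar>hdr k (\<sigma> n) y - \<theta> k y\<bar> \<le> e"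
        using unif[where k=k and m=m, OF e] unfolding eventually_sequentially by blast
    qed
    then have "\<forall>\<^sub>F n in sequentially. \<forall>k\<in>{..m}. \<forall>y. \<bar>y\<bar> \<le> real m \<longrightarrow> \<bar>hdr k (\<sigma> n) y - \<theta> k y\<bar> \<le> e"
      by (rule eventually_ball_finite[rotated]) simp
    then obtain N where N: "\<forall>n\<ge>N. \<forall>k\<in>{..m}. \<forall>y. \<bar>y\<bar> \<le> real m \<longrightarrow> \<bar>hdr k (\<sigma> n) y - \<theta> k y\<bar> \<le> e"
      unfolding eventually_sequentially by blast
    have "fdist (\<sigma> n) (\<theta> 0) < \<epsilon>" if "n \<ge> N" for n
    proof -
      have "pn m (\<lambda>x. \<sigma> n x - \<theta> 0 x) \<le> (\<Sum>k\<le>m. e)" unfolding pn_def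
      proof (rule sum_mono, rule sn_le)
        fix k y assume k: "k \<in> {..m}" and y: "\<bar>y\<bar> \<le> real m"
        have "smooth_on UNIV (\<theta> 0)" using \<psi>X by (simp add: Xs_def)
        then show "\<bar>hdr k (\<lambda>x. \<sigma> n x - \<theta> 0 x) y\<bar> \<le> e"
          using N that k y by (simp add: hdr_diff[OF sm] hd\<psi>)
      qed
      also have "\<dots> = \<epsilon> / 4" using \<epsilon> by (simp add: e_def field_simps)
      finally have "pn m (\<lambda>x. \<sigma> n x - \<theta> 0 x) \<le> \<epsilon> / 4" .
      then show ?thesis using fdist_upper[OF inX \<psi>X, of n m] m \<epsilon> by linarith
    qed
    then show "\<exists>N. \<forall>n\<ge>N. \<sigma> n \<in> Xs \<and> fdist (\<sigma> n) (\<theta> 0) < \<epsilon>" using inX by blast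
  qed
  then show "\<exists>x. limitin FM.mtopology \<sigma> x sequentially" by blast
qed



lemma zero_in_Xs: "(\<lambda>x. 0) \<in> Xs"
  unfolding Xs_def by (auto intro: smooth_on_const)

lemma Xs_lin: "\<psi> \<in> Xs \<Longrightarrow> \<phi> \<in> Xs \<Longrightarrow> (\<lambda>x. a * \<psi> x + b * \<phi> x) \<in> Xs"
  unfolding Xs_def using smooth_lin by auto

lemma Xs_diff: "\<psi> \<in> Xs \<Longrightarrow> \<phi> \<in> Xs \<Longrightarrow> (\<lambda>x. \<psi> x - \<phi> x) \<in> Xs"
  unfolding Xs_def using smooth_diff_real by auto

lemma UB:
  fixes Lf :: "'i \<Rightarrow> (real \<Rightarrow> real) \<Rightarrow> real" and \<epsilon> :: "'i \<Rightarrow> real"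
  assumes eps: "\<And>i. \<epsilon> i \<ge> 0"
    and lin: "\<And>i \<psi> \<phi> t. \<psi> \<in> Xs \<Longrightarrow> \<phi> \<in> Xs \<Longrightarrow> Lf i (\<lambda>x. \<psi> x + t * \<phi> x) = Lf i \<psi> + t * Lf i \<phi>"
    and cont: "\<And>i. \<exists>m C. \<forall>\<phi>\<in>Xs. \<bar>Lf i \<phi>\<bar> \<le> C * pn m \<phi>"
    and ptw: "\<And>\<psi>. \<psi> \<in> Xs \<Longrightarrow> \<exists>C. \<forall>i. \<bar>Lf i \<psi>\<bar> \<le> C * \<epsilon> i"
  shows "\<exists>m K. \<forall>i. \<forall>\<phi>\<in>Xs. \<bar>Lf i \<phi>\<bar> \<le> K * \<epsilon> i * pn m \<phi>"
proof -
  define E where "E C = {\<psi> \<in> Xs. \<forall>i. \<bar>Lf i \<psi>\<bar> \<le> real C * \<epsilon> i}" for C :: nat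
  have closed: "closedin FM.mtopology (E C)" for C
    unfolding FM.metric_closedin_iff_sequentially_closed
  proof (intro conjI allI impI)
    show "E C \<subseteq> Xs" by (auto simp: E_def)
    fix \<sigma> l assume a: "range \<sigma> \<subseteq> E C \<and> limitin FM.mtopology \<sigma> l sequentially"
    then have lX: "l \<in> Xs" and lim: "\<And>e. e > 0 \<Longrightarrow> \<exists>N. \<forall>n\<ge>N. \<sigma> n \<in> Xs \<and> fdist (\<sigma> n) l < e"
      unfolding FM.limit_metric_sequentially by auto
    have sE: "\<sigma> n \<in> Xs" "\<bar>Lf i (\<sigma> n)\<bar> \<le> real C * \<epsilon> i" for n i using a by (auto simp: E_def)
    have "\<bar>Lf i l\<bar> \<le> real C * \<epsilon> i" for i
    proof (rule field_le_epsilon)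
      fix \<delta> :: real assume \<delta>: "\<delta> > 0"
      obtain m Ci where Ci: "\<forall>\<phi>\<in>Xs. \<bar>Lf i \<phi>\<bar> \<le> Ci * pn m \<phi>" using cont by blast
      define \<delta>' where "\<delta>' = \<delta> / (\<bar>Ci\<bar> + 1)"
      have \<delta>': "\<delta>' > 0" using \<delta> by (simp add: \<delta>'_def add_pos_nonneg)
      have pos: "0 < (1/2::real)^Suc m * min 1 \<delta>'" using \<delta>' by simp
      obtain N where N: "\<forall>n\<ge>N. \<sigma> n \<in> Xs \<and> fdist (\<sigma> n) l < (1/2)^Suc m * min 1 \<delta>'"
        using lim[OF pos] by blast
      have p: "pn m (\<lambda>x. \<sigma> N x - l x) < \<delta>'" using small_pn[OF sE(1) lX _ \<delta>'] N by blast
      have dX: "(\<lambda>x. \<sigma> N x - l x) \<in> Xs" using Xs_diff sE(1) lX by blast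
      have "Lf i (\<sigma> N) = Lf i l + Lf i (\<lambda>x. \<sigma> N x - l x)" using lin[OF lX dX, where i=i and t=1] by simp
      then have eq: "Lf i l = Lf i (\<sigma> N) - Lf i (\<lambda>x. \<sigma> N x - l x)" by simp
      have "\<bar>Lf i (\<lambda>x. \<sigma> N x - l x)\<bar> \<le> Ci * pn m (\<lambda>x. \<sigma> N x - l x)" using Ci dX by blast
      also have "\<dots> \<le> \<bar>Ci\<bar> * pn m (\<lambda>x. \<sigma> N x - l x)"
        using pn_nonneg[of "\<lambda>x. \<sigma> N x - l x" m] dX by (intro mult_right_mono) (auto simp: Xs_def)
      also have "\<dots> \<le> \<bar>Ci\<bar> * \<delta>'" using p by (intro mult_left_mono) auto
      also have "\<dots> \<le> \<delta>" using \<delta> by (simp add: \<delta>'_def field_simps)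
      finally have "\<bar>Lf i (\<lambda>x. \<sigma> N x - l x)\<bar> \<le> \<delta>" .
      then show "\<bar>Lf i l\<bar> \<le> real C * \<epsilon> i + \<delta>" using eq sE(2)[where n=N and i=i] by linarith
    qed
    then show "l \<in> E C" using lX by (simp add: E_def)
  qed
  have cover: "\<Union>(range E) = Xs"
  proof
    show "\<Union>(range E) \<subseteq> Xs" by (auto simp: E_def)
    show "Xs \<subseteq> \<Union>(range E)"
    proof
      fix \<psi> assume \<psi>: "\<psi> \<in> Xs"
      obtain C where C: "\<forall>i. \<bar>Lf i \<psi>\<bar> \<le> C * \<epsilon> i" using ptw[OF \<psi>] by blast
      have "\<bar>Lf i \<psi>\<bar> \<le> real (nat \<lceil>C\<rceil>) * \<epsilon> i" for i
      proof -
        have "C \<le> real (nat \<lceil>C\<rceil>)" by linarith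
        then have "C * \<epsilon> i \<le> real (nat \<lceil>C\<rceil>) * \<epsilon> i" using eps by (intro mult_right_mono) auto
        then show ?thesis using C by (meson order_trans)
      qed
      then have "\<psi> \<in> E (nat \<lceil>C\<rceil>)" using \<psi> by (simp add: E_def)
      then show "\<psi> \<in> \<Union>(range E)" by blast
    qed
  qed
  have "\<exists>C. FM.mtopology interior_of (E C) \<noteq> {}"
  proof (rule ccontr)
    assume "\<not> ?thesis"
    then have "FM.mtopology interior_of \<Union>(range E) = {}"
      using closed by (intro FM.metric_Baire_category_alt FM_mcomplete) auto
    then have "FM.mtopology interior_of Xs = {}" using cover by simp
    moreover have "FM.mtopology interior_of Xs = Xs"
      using interior_of_topspace[of FM.mtopology] by simp
    ultimately show False using zero_in_Xs by blast
  qed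
  then obtain C \<psi>0 where "\<psi>0 \<in> FM.mtopology interior_of (E C)" by blast
  then obtain r where \<psi>0X: "\<psi>0 \<in> Xs" and r: "r > 0" and ball: "FM.mball \<psi>0 r \<subseteq> E C"
    unfolding FM.in_interior_of_mball by blast
  have \<psi>0E: "\<psi>0 \<in> E C" using ball \<psi>0X r by auto
  obtain m0 where m0: "(1/2::real)^m0 < r/2" using real_arch_pow_inv[of "r/2" "1/2"] r by auto
  have key: "t * \<bar>Lf i \<phi>\<bar> \<le> 2 * real C * \<epsilon> i"
    if \<phi>: "\<phi> \<in> Xs" and t: "t > 0" and tp: "t * pn m0 \<phi> < r/2" for \<phi> t i
  proof -
    define \<psi>' where "\<psi>' = (\<lambda>x. \<psi>0 x + t * \<phi> x)"
    have \<psi>'X: "\<psi>' \<in> Xs" using Xs_lin[OF \<psi>0X \<phi>, of 1 t] by (simp add: \<psi>'_def)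
    have e1: "(\<lambda>x. \<psi>0 x - \<psi>' x) = (\<lambda>x. (- t) * \<phi> x + 0 * \<phi> x)" by (auto simp: \<psi>'_def)
    have "pn m0 (\<lambda>x. \<psi>0 x - \<psi>' x) \<le> \<bar>-t\<bar> * pn m0 \<phi> + \<bar>0\<bar> * pn m0 \<phi>"
      unfolding e1 by (rule pn_lin) (use \<phi> in \<open>auto simp: Xs_def\<close>)
    then have "pn m0 (\<lambda>x. \<psi>0 x - \<psi>' x) \<le> t * pn m0 \<phi>" using t by simp
    then have "fdist \<psi>0 \<psi>' < r" using fdist_upper[OF \<psi>0X \<psi>'X, of m0] m0 tp by linarith
    then have "\<psi>' \<in> E C" using ball \<psi>0X \<psi>'X by auto
    then have "\<bar>Lf i \<psi>'\<bar> \<le> real C * \<epsilon> i" by (simp add: E_def)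
    moreover have "\<bar>Lf i \<psi>0\<bar> \<le> real C * \<epsilon> i" using \<psi>0E by (simp add: E_def)
    moreover have "Lf i \<psi>' = Lf i \<psi>0 + t * Lf i \<phi>" unfolding \<psi>'_def by (rule lin[OF \<psi>0X \<phi>])
    ultimately have "\<bar>t * Lf i \<phi>\<bar> \<le> 2 * real C * \<epsilon> i" by linarith
    then show ?thesis using t by (simp add: abs_mult)
  qed
  have "\<bar>Lf i \<phi>\<bar> \<le> (8 * real C / r) * \<epsilon> i * pn m0 \<phi>" if \<phi>: "\<phi> \<in> Xs" for i \<phi>
  proof (cases "pn m0 \<phi> = 0")
    case True
    have "\<bar>Lf i \<phi>\<bar> = 0"
    proof (rule ccontr)
      assume ne: "\<bar>Lf i \<phi>\<bar> \<noteq> 0"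
      then have pos: "\<bar>Lf i \<phi>\<bar> > 0" by simp
      define t where "t = (2 * real C * \<epsilon> i + 1) / \<bar>Lf i \<phi>\<bar>"
      have "0 \<le> 2 * real C * \<epsilon> i" using eps by simp
      then have t: "t > 0" using pos by (simp add: t_def)
      have "t * \<bar>Lf i \<phi>\<bar> \<le> 2 * real C * \<epsilon> i" by (rule key[OF \<phi> t]) (use True r in simp)
      moreover have "t * \<bar>Lf i \<phi>\<bar> = 2 * real C * \<epsilon> i + 1" using pos by (simp add: t_def)
      ultimately show False by linarith
    qed
    then show ?thesis using True by simp
  next
    case False
    have p: "pn m0 \<phi> > 0" using False pn_nonneg[of \<phi> m0] \<phi> by (auto simp: Xs_def)
    define t where "t = r / (4 * pn m0 \<phi>)"
    have t: "t > 0" using p r by (simp add: t_def)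
    have tp: "t * pn m0 \<phi> = r / 4" using p by (simp add: t_def)
    have "t * \<bar>Lf i \<phi>\<bar> \<le> 2 * real C * \<epsilon> i" by (rule key[OF \<phi> t]) (use tp r in simp)
    then have "\<bar>Lf i \<phi>\<bar> \<le> (2 * real C * \<epsilon> i) / t" using t by (simp add: field_simps)
    also have "\<dots> = (8 * real C / r) * \<epsilon> i * pn m0 \<phi>" using p r by (simp add: t_def field_simps)
    finally show ?thesis .
  qed
  then show ?thesis by blast
qed



lemma exp_family:
  fixes s lam a :: real
  defines "\<theta> \<equiv> \<lambda>k y. (s * lam)^k * exp (s * lam * (y - a))"
  shows "smooth_on UNIV (\<theta> 0)" "hdr k (\<theta> 0) = \<theta> k"
proof -
  have ch: "(\<theta> k has_real_derivative \<theta> (Suc k) y) (at y)" for k y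
    unfolding \<theta>_def by (auto intro!: derivative_eq_intros simp: algebra_simps)
  show "smooth_on UNIV (\<theta> 0)" by (rule chain_smooth(1)[of \<theta>, OF ch])
  show "hdr k (\<theta> 0) = \<theta> k" by (rule chain_smooth(2)[of \<theta>, OF ch])
qed

lemma exp_contra:
  fixes s a Kc :: real and c :: "nat \<Rightarrow> real" and z :: "nat \<Rightarrow> real" and Fs :: "nat set"
  assumes s: "s = 1 \<or> s = -1"
    and Kb: "\<forall>\<phi>\<in>Xs. \<bar>(\<Sum>k\<in>Fs. c k * \<phi> (z k)) - deriv \<phi> a\<bar> \<le> Kc * pn m0 \<phi>"
    and Kc: "Kc \<ge> 0"
    and nodes: "\<forall>k\<in>Fs. s * (z k - a) \<le> 0"
    and far: "s * a > real m0"
  shows False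
proof -
  define \<delta> where "\<delta> = s * a - real m0"
  have \<delta>: "\<delta> > 0" using far by (simp add: \<delta>_def)
  define S where "S = (\<Sum>k\<in>Fs. \<bar>c k\<bar>)"
  obtain X where X: "\<forall>x\<ge>X. x ^ m0 / exp x \<le> (1::real)"
  proof -
    have "\<forall>\<^sub>F x in at_top. x ^ m0 / exp x < (1::real)"
      using order_tendstoD(2)[OF tendsto_power_div_exp_0[of m0], of 1] by (simp only: zero_less_one)
    then show ?thesis using that unfolding eventually_at_top_linorder by (meson less_imp_le)
  qed
  define R where "R = Kc * (real m0 + 1) / \<delta> ^ m0"
  have R: "R \<ge> 0" using Kc \<delta> by (simp add: R_def)
  define lam where "lam = max 1 (max (X / \<delta>) (S + R + 1))"
  have lam1: "lam \<ge> 1" and lamS: "lam \<ge> S + R + 1" and lamX': "lam \<ge> X / \<delta>"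
    by (auto simp: lam_def)
  have lamX: "lam * \<delta> \<ge> X" using lamX' \<delta> by (simp add: field_simps)
  define \<psi> where "\<psi> = (\<lambda>y. (s * lam)^0 * exp (s * lam * (y - a)))"
  have \<psi>X: "\<psi> \<in> Xs" using exp_family(1)[of s lam a] by (simp add: Xs_def \<psi>_def)
  have hd\<psi>: "hdr k \<psi> = (\<lambda>y. (s * lam)^k * exp (s * lam * (y - a)))" for k
    using exp_family(2)[of k s lam a] by (simp add: \<psi>_def)
  have s2: "\<bar>s\<bar> = 1" using s by auto
  have dpsi: "deriv \<psi> a = s * lam" using fun_cong[OF hd\<psi>[of 1], of a] by (simp add: hdr_Suc)
  have pnb: "pn m0 \<psi> \<le> (real m0 + 1) * lam ^ m0 * exp (- lam * \<delta>)"
  proof -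
    have "sn k m0 \<psi> \<le> lam ^ m0 * exp (- lam * \<delta>)" if "k \<le> m0" for k
    proof (rule sn_le)
      fix y :: real assume y: "\<bar>y\<bar> \<le> real m0"
      have "\<bar>hdr k \<psi> y\<bar> = lam ^ k * exp (s * lam * (y - a))"
        unfolding hd\<psi> using lam1 s2 by (simp add: abs_mult power_abs)
      also have "\<dots> \<le> lam ^ m0 * exp (- lam * \<delta>)"
      proof (intro mult_mono)
        show "lam ^ k \<le> lam ^ m0" using lam1 that by (simp add: power_increasing)
        have "s * y \<le> real m0" using y s by auto
        then have "s * lam * (y - a) \<le> - lam * \<delta>" using lam1 
          by (simp add: \<delta>_def algebra_simps)
        then show "exp (s * lam * (y - a)) \<le> exp (- lam * \<delta>)" by simp
      qed (use lam1 in auto)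
      finally show "\<bar>hdr k \<psi> y\<bar> \<le> lam ^ m0 * exp (- lam * \<delta>)" .
    qed
    then have "pn m0 \<psi> \<le> (\<Sum>k\<le>m0. lam ^ m0 * exp (- lam * \<delta>))" unfolding pn_def
      by (intro sum_mono) auto
    then show ?thesis by (simp add: algebra_simps)
  qed
  have "lam ^ m0 * exp (- lam * \<delta>) = ((lam * \<delta>) ^ m0 / exp (lam * \<delta>)) / \<delta> ^ m0"
    using \<delta> by (simp add: exp_minus power_mult_distrib field_simps)
  also have "\<dots> \<le> 1 / \<delta> ^ m0"
    using X lamX \<delta> by (intro divide_right_mono) auto
  finally have small: "lam ^ m0 * exp (- lam * \<delta>) \<le> 1 / \<delta> ^ m0" .
  have "Kc * pn m0 \<psi> \<le> Kc * ((real m0 + 1) * lam ^ m0 * exp (- lam * \<delta>))"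
    using pnb Kc by (rule mult_left_mono)
  also have "\<dots> \<le> Kc * ((real m0 + 1) * (1 / \<delta> ^ m0))"
  proof -
    have "(real m0 + 1) * (lam ^ m0 * exp (- lam * \<delta>)) \<le> (real m0 + 1) * (1 / \<delta> ^ m0)"
      using small by (intro mult_left_mono) auto
    then show ?thesis using Kc by (intro mult_left_mono) (auto simp: mult.assoc)
  qed
  also have "\<dots> = R" by (simp add: R_def)
  finally have up: "Kc * pn m0 \<psi> \<le> R" .
  have sumb: "\<bar>\<Sum>k\<in>Fs. c k * \<psi> (z k)\<bar> \<le> S"
  proof -
    have "\<bar>\<Sum>k\<in>Fs. c k * \<psi> (z k)\<bar> \<le> (\<Sum>k\<in>Fs. \<bar>c k * \<psi> (z k)\<bar>)" by (rule sum_abs)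
    also have "\<dots> \<le> (\<Sum>k\<in>Fs. \<bar>c k\<bar>)"
    proof (rule sum_mono)
      fix k assume k: "k \<in> Fs"
      have "s * lam * (z k - a) \<le> 0"
        using nodes k lam1 by (metis mult.commute mult.left_commute mult_nonneg_nonpos zero_le_one order_trans)
      then have "\<bar>\<psi> (z k)\<bar> \<le> 1" by (simp add: \<psi>_def)
      then show "\<bar>c k * \<psi> (z k)\<bar> \<le> \<bar>c k\<bar>" by (simp add: abs_mult mult_left_le)
    qed
    finally show ?thesis by (simp add: S_def)
  qed
  have "\<bar>(\<Sum>k\<in>Fs. c k * \<psi> (z k)) - deriv \<psi> a\<bar> \<le> R" using Kb \<psi>X up by fastforce
  moreover have "\<bar>deriv \<psi> a\<bar> = lam" using dpsi s2 lam1 by (simp add: abs_mult)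
  ultimately show False using sumb lamS by linarith
qed



definition DY :: "(real \<times> real \<Rightarrow> real) \<Rightarrow> real \<times> real \<Rightarrow> real" where
  "DY G = (\<lambda>z. frechet_derivative G (at z) (0, 1))"

lemma DY_smooth: "smooth_on UNIV G \<Longrightarrow> smooth_on UNIV ((DY ^^ k) G)"
  by (induction k) (auto simp: DY_def intro: smooth_on_deriv)

lemma slice_deriv:
  assumes "smooth_on UNIV G"
  shows "((\<lambda>y. G (a, y)) has_real_derivative DY G (a, y)) (at y)"
proof -
  have hG: "(G has_derivative frechet_derivative G (at (a, y))) (at (a, y))"
    using smooth_on_hasderiv[OF assms] by blast
  have hp: "((\<lambda>y. (a, y)) has_derivative (\<lambda>h. (0, h))) (at y)"
    by (auto intro!: derivative_eq_intros)
  have c: "((\<lambda>y. G (a, y)) has_derivative (\<lambda>h. frechet_derivative G (at (a, y)) (0, h))) (at y)"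
    using has_derivative_compose[OF hp, of G] hG by simp
  have lin: "linear (frechet_derivative G (at (a, y)))" using hG has_derivative_linear by blast
  have "frechet_derivative G (at (a, y)) (0, h) = h * DY G (a, y)" for h
  proof -
    have "frechet_derivative G (at (a, y)) (0, h) = frechet_derivative G (at (a, y)) (h *\<^sub>R (0, 1))" by simp
    also have "\<dots> = h * frechet_derivative G (at (a, y)) (0, 1)" using linear_scale[OF lin, of h "(0,1)"] by simp
    finally show ?thesis by (simp add: DY_def)
  qed
  then show ?thesis using has_derivative_imp_has_field_derivative[OF c] by metis
qed

lemma slice:
  assumes "smooth_on UNIV G"
  shows "smooth_on UNIV (\<lambda>y. G (a, y))" "hdr k (\<lambda>y. G (a, y)) = (\<lambda>y. (DY ^^ k) G (a, y))"
proof -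
  let ?\<theta> = "\<lambda>k y. (DY ^^ k) G (a, y)"
  have ch: "(?\<theta> k has_real_derivative ?\<theta> (Suc k) y) (at y)" for k y
    using slice_deriv[OF DY_smooth[OF assms, of k], of a y] by simp
  show "smooth_on UNIV (\<lambda>y. G (a, y))" using chain_smooth(1)[of ?\<theta>, OF ch] by simp
  show "hdr k (\<lambda>y. G (a, y)) = (\<lambda>y. (DY ^^ k) G (a, y))" using chain_smooth(2)[of ?\<theta>, OF ch] by simp
qed

lemma bound_compact:
  fixes G :: "real \<times> real \<Rightarrow> real"
  assumes "smooth_on UNIV G"
  shows "\<exists>B. \<forall>a y. \<bar>a\<bar> \<le> r \<longrightarrow> \<bar>y\<bar> \<le> r \<longrightarrow> \<bar>G (a, y)\<bar> \<le> B"
proof -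
  have "compact ({-r..r} \<times> {-r..r})" by (intro compact_Times compact_Icc)
  moreover have "continuous_on ({-r..r} \<times> {-r..r}) G"
    using smooth_on_cont[OF assms] continuous_on_subset by blast
  ultimately have "bounded (G ` ({-r..r} \<times> {-r..r}))"
    by (intro compact_imp_bounded compact_continuous_image)
  then obtain B where "\<forall>z\<in>G ` ({-r..r} \<times> {-r..r}). norm z \<le> B" unfolding bounded_iff by blast
  then show ?thesis by (intro exI[of _ B]) (auto simp: abs_le_iff)
qed

lemma slice_pn_bound:
  assumes "smooth_on UNIV G"
  shows "\<exists>B. \<forall>a. \<bar>a\<bar> \<le> real m \<longrightarrow> pn m (\<lambda>y. G (a, y)) \<le> B"
proof -
  have "\<forall>k. \<exists>B. \<forall>a y. \<bar>a\<bar> \<le> real m \<longrightarrow> \<bar>y\<bar> \<le> real m \<longrightarrow> \<bar>(DY ^^ k) G (a, y)\<bar> \<le> B"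
    using bound_compact[OF DY_smooth[OF assms]] by blast
  then obtain Bf where Bf: "\<And>k a y. \<bar>a\<bar> \<le> real m \<Longrightarrow> \<bar>y\<bar> \<le> real m \<Longrightarrow> \<bar>(DY ^^ k) G (a, y)\<bar> \<le> Bf k"
    by metis
  have "pn m (\<lambda>y. G (a, y)) \<le> (\<Sum>k\<le>m. Bf k)" if a: "\<bar>a\<bar> \<le> real m" for a
    unfolding pn_def
  proof (rule sum_mono, rule sn_le)
    fix k y assume "\<bar>y\<bar> \<le> real m"
    then show "\<bar>hdr k (\<lambda>y. G (a, y)) y\<bar> \<le> Bf k" using Bf a by (simp add: slice(2)[OF assms])
  qed
  then show ?thesis by blast
qed

lemma FIN:
  fixes \<Phi> :: "real \<times> real \<Rightarrow> real^'c" and T :: "real \<Rightarrow> real^'c"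
    and N :: "nat \<Rightarrow> nat" and x :: "nat \<Rightarrow> nat \<Rightarrow> real" and dx :: "nat \<Rightarrow> real"
    and D :: "nat \<Rightarrow> nat \<Rightarrow> nat \<Rightarrow> real"
  assumes \<Phi>s: "smooth_on UNIV \<Phi>"
    and Td: "\<And>a. ((\<lambda>y. \<Phi> (a, y)) has_vector_derivative T a) (at a)"
    and UBr: "\<forall>j. \<forall>i<N j. \<forall>\<phi>\<in>Xs. \<bar>(\<Sum>k<N j. D j i k * \<phi> (x j k)) - deriv \<phi> (x j i)\<bar> \<le> K * dx j ^ p * pn m0 \<phi>"
    and nb: "\<forall>j. \<forall>i<N j. \<bar>x j i\<bar> \<le> real m0"
    and dxp: "\<And>j. dx j > 0"
  shows "\<exists>C. \<forall>j. \<forall>i<N j. norm ((\<Sum>k<N j. D j i k *\<^sub>R \<Phi> (x j i, x j k)) - T (x j i)) \<le> C * dx j ^ p"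
proof -
  define Gc where "Gc c = (\<lambda>z. \<Phi> z $ c)" for c
  have Gs: "smooth_on UNIV (Gc c)" for c
    unfolding Gc_def by (rule smooth_on_linear_comp[OF open_UNIV bounded_linear_vec_nth \<Phi>s])
  have "\<forall>c. \<exists>B. \<forall>a. \<bar>a\<bar> \<le> real m0 \<longrightarrow> pn m0 (\<lambda>y. Gc c (a, y)) \<le> B"
    using slice_pn_bound[OF Gs] by blast
  then obtain Bc where Bc: "\<And>c a. \<bar>a\<bar> \<le> real m0 \<Longrightarrow> pn m0 (\<lambda>y. Gc c (a, y)) \<le> Bc c" by metis
  define C where "C = \<bar>K\<bar> * (\<Sum>c\<in>UNIV. Bc c)"
  have "norm ((\<Sum>k<N j. D j i k *\<^sub>R \<Phi> (x j i, x j k)) - T (x j i)) \<le> C * dx j ^ p"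
    if i: "i < N j" for j i
  proof -
    let ?a = "x j i"
    have comp: "\<bar>((\<Sum>k<N j. D j i k *\<^sub>R \<Phi> (?a, x j k)) - T ?a) $ c\<bar> \<le> \<bar>K\<bar> * dx j ^ p * Bc c" for c
    proof -
      have sX: "(\<lambda>y. Gc c (?a, y)) \<in> Xs" using slice(1)[OF Gs] by (simp add: Xs_def)
      have "((\<lambda>y. \<Phi> (?a, y) $ c) has_derivative (\<lambda>h. (h *\<^sub>R T ?a) $ c)) (at ?a)"
        using bounded_linear.has_derivative[OF bounded_linear_vec_nth Td[of ?a, unfolded has_vector_derivative_def]] .
      then have "((\<lambda>y. Gc c (?a, y)) has_real_derivative T ?a $ c) (at ?a)"
        unfolding Gc_def by (rule has_derivative_imp_has_field_derivative) (simp add: mult.commute)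
      then have dv: "deriv (\<lambda>y. Gc c (?a, y)) ?a = T ?a $ c" by (rule DERIV_imp_deriv)
      have "((\<Sum>k<N j. D j i k *\<^sub>R \<Phi> (?a, x j k)) - T ?a) $ c =
            (\<Sum>k<N j. D j i k * Gc c (?a, x j k)) - deriv (\<lambda>y. Gc c (?a, y)) ?a"
      proof -
        have dv': "deriv (\<lambda>y. \<Phi> (?a, y) $ c) ?a = T ?a $ c" using dv by (simp add: Gc_def)
        show ?thesis by (simp add: dv' Gc_def)
      qed
      also have "\<bar>\<dots>\<bar> \<le> K * dx j ^ p * pn m0 (\<lambda>y. Gc c (?a, y))"
        by (rule UBr[rule_format, OF i sX])
      also have "\<dots> \<le> \<bar>K\<bar> * dx j ^ p * pn m0 (\<lambda>y. Gc c (?a, y))"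
        using pn_nonneg[of "\<lambda>y. Gc c (?a, y)" m0] sX dxp[of j]
        by (intro mult_right_mono) (auto simp: Xs_def)
      also have "\<dots> \<le> \<bar>K\<bar> * dx j ^ p * Bc c"
        using Bc[of ?a c] nb i dxp[of j] by (intro mult_left_mono) auto
      finally show ?thesis .
    qed
    have "norm ((\<Sum>k<N j. D j i k *\<^sub>R \<Phi> (?a, x j k)) - T ?a)
        \<le> (\<Sum>c\<in>UNIV. \<bar>((\<Sum>k<N j. D j i k *\<^sub>R \<Phi> (?a, x j k)) - T ?a) $ c\<bar>)"
      by (rule norm_le_l1_cart)
    also have "\<dots> \<le> (\<Sum>c\<in>UNIV. \<bar>K\<bar> * dx j ^ p * Bc c)" by (rule sum_mono, rule comp)
    also have "\<dots> = C * dx j ^ p" by (simp add: C_def sum_distrib_left mult_ac)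
    finally show ?thesis .
  qed
  then show ?thesis by blast
qed



lemma bb_mv: "bounded_bilinear (\<lambda>(A::real^'m^'n) (w::real^'m). A *v w)"
proof
  fix A A' :: "real^'m^'n" and w w' :: "real^'m" and r :: real
  show "(A + A') *v w = A *v w + A' *v w" by (simp add: matrix_vector_mult_add_rdistrib)
  show "A *v (w + w') = A *v w + A *v w'" by (simp add: matrix_vector_right_distrib)
  show "(r *\<^sub>R A) *v w = r *\<^sub>R (A *v w)" by (simp add: scaleR_matrix_vector_assoc)
  show "A *v (r *\<^sub>R w) = r *\<^sub>R (A *v w)" by (simp add: matrix_vector_mult_scaleR)
next
  show "\<exists>K. \<forall>(A::real^'m^'n) (w::real^'m). norm (A *v w) \<le> norm A * norm w * K"
  proof (intro exI allI)
    fix A :: "real^'m^'n" and w :: "real^'m"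
    have c: "\<bar>(A *v w) $ i\<bar> \<le> (\<Sum>j\<in>(UNIV::'m set). norm A * norm w)" for i
    proof -
      have "\<bar>(A *v w) $ i\<bar> = \<bar>\<Sum>j\<in>UNIV. A $ i $ j * w $ j\<bar>" by (simp add: matrix_vector_mult_def)
      also have "\<dots> \<le> (\<Sum>j\<in>UNIV. \<bar>A $ i $ j\<bar> * \<bar>w $ j\<bar>)" by (rule order_trans[OF sum_abs]) (simp add: abs_mult)
      also have "\<dots> \<le> (\<Sum>j\<in>(UNIV::'m set). norm A * norm w)"
      proof (rule sum_mono, rule mult_mono)
        fix j
        show "\<bar>A $ i $ j\<bar> \<le> norm A" by (rule order_trans[OF component_le_norm_cart Finite_Cartesian_Product.norm_nth_le])
        show "\<bar>w $ j\<bar> \<le> norm w" by (rule component_le_norm_cart)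
      qed auto
      finally show ?thesis .
    qed
    have "norm (A *v w) \<le> (\<Sum>i\<in>UNIV. \<bar>(A *v w) $ i\<bar>)" by (rule norm_le_l1_cart)
    also have "\<dots> \<le> (\<Sum>i\<in>(UNIV::'n set). \<Sum>j\<in>(UNIV::'m set). norm A * norm w)" by (rule sum_mono, rule c)
    also have "\<dots> = norm A * norm w * (real CARD('n) * real CARD('m))" by simp
    finally show "norm (A *v w) \<le> norm A * norm w * (real CARD('n) * real CARD('m))" .
  qed
qed

lemma sym_deriv:
  fixes \<Psi> :: "(real^'n) \<times> (real^'n) \<Rightarrow> 'b::real_normed_vector" and Y :: "(real^'n) set"
  assumes Yo: "open Y" and \<Psi>s: "smooth_on (Y \<times> Y) \<Psi>"
    and sym: "\<And>a b. a \<in> Y \<Longrightarrow> b \<in> Y \<Longrightarrow> \<Psi> (a, b) = \<Psi> (b, a)"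
    and v: "v \<in> Y"
  shows "frechet_derivative \<Psi> (at (v, v)) (w, 0) = frechet_derivative \<Psi> (at (v, v)) (0, w)"
proof -
  let ?D = "frechet_derivative \<Psi> (at (v, v))"
  have YY: "open (Y \<times> Y)" "(v, v) \<in> Y \<times> Y" using Yo v by (auto intro: open_Times)
  have h\<Psi>: "(\<Psi> has_derivative ?D) (at (v, v))" using smooth_on_hasderiv[OF \<Psi>s YY(2)] .
  have hs: "((\<lambda>z::(real^'n) \<times> (real^'n). (snd z, fst z)) has_derivative (\<lambda>h. (snd h, fst h))) (at (v, v))"
    by (auto intro!: derivative_eq_intros)
  have "((\<lambda>z. \<Psi> (snd z, fst z)) has_derivative (\<lambda>h. ?D (snd h, fst h))) (at (v, v))"
    using has_derivative_compose[OF hs, of \<Psi> ?D] h\<Psi> by simp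
  then have "(\<Psi> has_derivative (\<lambda>h. ?D (snd h, fst h))) (at (v, v))"
    by (rule has_derivative_transform_within_open[OF _ YY]) (auto simp: sym)
  from has_derivative_unique[OF h\<Psi> this] have "?D = (\<lambda>h. ?D (snd h, fst h))" .
  from fun_cong[OF this, of "(w, 0)"] show ?thesis by simp
qed

definition Ud :: "(real \<Rightarrow> 'a::real_normed_vector) \<Rightarrow> real \<Rightarrow> 'a" where
  "Ud u t = frechet_derivative u (at t) 1"

lemma Ud_lin:
  fixes u :: "real \<Rightarrow> 'a::real_normed_vector"
  assumes "smooth_on UNIV u"
  shows "frechet_derivative u (at t) h = h *\<^sub>R Ud u t"
proof -
  have "linear (frechet_derivative u (at t))" using smooth_on_hasderiv[OF assms] has_derivative_linear by blast
  from linear_scale[OF this, of h 1] show ?thesis by (simp add: Ud_def)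
qed

lemma curve_partial:
  fixes \<Psi> :: "(real^'n) \<times> (real^'n) \<Rightarrow> 'b::real_normed_vector" and Y :: "(real^'n) set"
    and u :: "real \<Rightarrow> real^'n"
  assumes Yo: "open Y" and \<Psi>s: "smooth_on (Y \<times> Y) \<Psi>" and us: "smooth_on UNIV u" and uY: "\<And>t. u t \<in> Y"
  shows "((\<lambda>y. \<Psi> (u a, u y)) has_vector_derivative frechet_derivative \<Psi> (at (u a, u a)) (0, Ud u a)) (at a)"
proof -
  let ?D = "frechet_derivative \<Psi> (at (u a, u a))"
  have YY: "(u a, u a) \<in> Y \<times> Y" using uY by auto
  have h\<Psi>: "(\<Psi> has_derivative ?D) (at (u a, u a))" using smooth_on_hasderiv[OF \<Psi>s YY] .
  have lin: "linear ?D" using h\<Psi> has_derivative_linear by blast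
  have hu: "(u has_derivative (\<lambda>h. h *\<^sub>R Ud u a)) (at a)"
  proof -
    have "frechet_derivative u (at a) = (\<lambda>h. h *\<^sub>R Ud u a)" using Ud_lin[OF us] by (simp add: fun_eq_iff)
    then show ?thesis using smooth_on_hasderiv[OF us, of a] by simp
  qed
  have hp: "((\<lambda>y. (u a, u y)) has_derivative (\<lambda>h. (0, h *\<^sub>R Ud u a))) (at a)"
    using has_derivative_Pair[OF has_derivative_const[of "u a"] hu] by simp
  have "((\<lambda>y. \<Psi> (u a, u y)) has_derivative (\<lambda>h. ?D (0, h *\<^sub>R Ud u a))) (at a)"
    using has_derivative_compose[OF hp, of \<Psi> ?D] h\<Psi> by simp
  moreover have "?D (0, h *\<^sub>R Ud u a) = h *\<^sub>R ?D (0, Ud u a)" for h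
    using linear_scale[OF lin, of h "(0, Ud u a)"] by simp
  ultimately show ?thesis unfolding has_vector_derivative_def by simp
qed

lemma curve_diag:
  fixes \<Psi> :: "(real^'n) \<times> (real^'n) \<Rightarrow> 'b::real_normed_vector" and Y :: "(real^'n) set"
    and u :: "real \<Rightarrow> real^'n"
  assumes Yo: "open Y" and \<Psi>s: "smooth_on (Y \<times> Y) \<Psi>" and us: "smooth_on UNIV u" and uY: "\<And>t. u t \<in> Y"
    and sym: "\<And>a b. a \<in> Y \<Longrightarrow> b \<in> Y \<Longrightarrow> \<Psi> (a, b) = \<Psi> (b, a)"
  shows "((\<lambda>s. \<Psi> (u s, u s)) has_vector_derivative 2 *\<^sub>R frechet_derivative \<Psi> (at (u a, u a)) (0, Ud u a)) (at a)"
proof -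
  let ?D = "frechet_derivative \<Psi> (at (u a, u a))"
  have YY: "(u a, u a) \<in> Y \<times> Y" using uY by auto
  have h\<Psi>: "(\<Psi> has_derivative ?D) (at (u a, u a))" using smooth_on_hasderiv[OF \<Psi>s YY] .
  have lin: "linear ?D" using h\<Psi> has_derivative_linear by blast
  have hu: "(u has_derivative (\<lambda>h. h *\<^sub>R Ud u a)) (at a)"
  proof -
    have "frechet_derivative u (at a) = (\<lambda>h. h *\<^sub>R Ud u a)" using Ud_lin[OF us] by (simp add: fun_eq_iff)
    then show ?thesis using smooth_on_hasderiv[OF us, of a] by simp
  qed
  have hp: "((\<lambda>s. (u s, u s)) has_derivative (\<lambda>h. (h *\<^sub>R Ud u a, h *\<^sub>R Ud u a))) (at a)"
    using has_derivative_Pair[OF hu hu] by simp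
  have c: "((\<lambda>s. \<Psi> (u s, u s)) has_derivative (\<lambda>h. ?D (h *\<^sub>R Ud u a, h *\<^sub>R Ud u a))) (at a)"
    using has_derivative_compose[OF hp, of \<Psi> ?D] h\<Psi> by simp
  have "?D (h *\<^sub>R Ud u a, h *\<^sub>R Ud u a) = h *\<^sub>R (2 *\<^sub>R ?D (0, Ud u a))" for h
  proof -
    have "?D (h *\<^sub>R Ud u a, h *\<^sub>R Ud u a) = h *\<^sub>R ?D (Ud u a, Ud u a)"
      using linear_scale[OF lin, of h "(Ud u a, Ud u a)"] by simp
    also have "?D (Ud u a, Ud u a) = ?D (Ud u a, 0) + ?D (0, Ud u a)"
      using linear_add[OF lin, of "(Ud u a, 0)" "(0, Ud u a)"] by simp
    also have "?D (Ud u a, 0) = ?D (0, Ud u a)" by (rule sym_deriv[OF Yo \<Psi>s sym uY])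
    finally show ?thesis by (simp add: scaleR_2)
  qed
  then show ?thesis using c unfolding has_vector_derivative_def by simp
qed



lemma UB_inst:
  fixes N :: "nat \<Rightarrow> nat" and x :: "nat \<Rightarrow> nat \<Rightarrow> real" and dx :: "nat \<Rightarrow> real"
    and D :: "nat \<Rightarrow> nat \<Rightarrow> nat \<Rightarrow> real" and p :: nat
  assumes dx_pos: "\<And>j. dx j > 0" and D_order: "derivative_matrix_of_order N x dx D p"
  shows "\<exists>m0 K. \<forall>j. \<forall>i<N j. \<forall>\<phi>\<in>Xs. \<bar>(\<Sum>k<N j. D j i k * \<phi> (x j k)) - deriv \<phi> (x j i)\<bar> \<le> K * dx j ^ p * pn m0 \<phi>"
proof -
  define Lf where "Lf = (\<lambda>(j, i) (\<phi>::real\<Rightarrow>real). if i < N j then (\<Sum>k<N j. D j i k * \<phi> (x j k)) - deriv \<phi> (x j i) else 0)"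
  define \<epsilon> where "\<epsilon> = (\<lambda>(j::nat, i::nat). dx j ^ p)"
  have "\<exists>m K. \<forall>ji. \<forall>\<phi>\<in>Xs. \<bar>Lf ji \<phi>\<bar> \<le> K * \<epsilon> ji * pn m \<phi>"
  proof (rule UB)
    show "\<epsilon> ji \<ge> 0" for ji using dx_pos by (auto simp: \<epsilon>_def split: prod.splits intro: less_imp_le)
  next
    fix ji \<psi> \<phi> t assume \<psi>: "\<psi> \<in> Xs" and \<phi>: "\<phi> \<in> Xs"
    have dv: "deriv (\<lambda>x. \<psi> x + t * \<phi> x) y = deriv \<psi> y + t * deriv \<phi> y" for y
    proof (rule DERIV_imp_deriv)
      show "((\<lambda>x. \<psi> x + t * \<phi> x) has_real_derivative deriv \<psi> y + t * deriv \<phi> y) (at y)"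
        using smooth_real_deriv(1)[of \<psi> y] smooth_real_deriv(1)[of \<phi> y] \<psi> \<phi>
        by (auto intro!: derivative_eq_intros simp: Xs_def)
    qed
    show "Lf ji (\<lambda>x. \<psi> x + t * \<phi> x) = Lf ji \<psi> + t * Lf ji \<phi>"
      by (cases ji) (simp add: Lf_def dv algebra_simps sum.distrib sum_distrib_left)
  next
    fix ji :: "nat \<times> nat"
    obtain j i where ji: "ji = (j, i)" by (cases ji)
    define m where "m = Suc (nat \<lceil>\<Sum>k<N j. \<bar>x j k\<bar>\<rceil>)"
    define C where "C = (\<Sum>k<N j. \<bar>D j i k\<bar>) + 1"
    have xm: "\<bar>x j k\<bar> \<le> real m" if "k < N j" for k
    proof -
      have "\<bar>x j k\<bar> \<le> (\<Sum>k<N j. \<bar>x j k\<bar>)" by (rule member_le_sum) (use that in auto)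
      also have "\<dots> \<le> real m" unfolding m_def by linarith
      finally show ?thesis .
    qed
    have "\<forall>\<phi>\<in>Xs. \<bar>Lf ji \<phi>\<bar> \<le> C * pn m \<phi>"
    proof
      fix \<phi> assume \<phi>: "\<phi> \<in> Xs"
      then have s\<phi>: "smooth_on UNIV \<phi>" by (simp add: Xs_def)
      have p0: "0 \<le> pn m \<phi>" using pn_nonneg[OF s\<phi>] .
      show "\<bar>Lf ji \<phi>\<bar> \<le> C * pn m \<phi>"
      proof (cases "i < N j")
        case False then show ?thesis using p0 by (simp add: Lf_def ji C_def sum_nonneg)
      next
        case True
        have "\<bar>\<Sum>k<N j. D j i k * \<phi> (x j k)\<bar> \<le> (\<Sum>k<N j. \<bar>D j i k\<bar> * pn m \<phi>)"
        proof (rule order_trans[OF sum_abs], rule sum_mono)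
          fix k assume k: "k \<in> {..<N j}"
          have "\<bar>hdr 0 \<phi> (x j k)\<bar> \<le> pn m \<phi>" by (rule pn_ge[OF s\<phi>]) (use xm k in auto)
          then show "\<bar>D j i k * \<phi> (x j k)\<bar> \<le> \<bar>D j i k\<bar> * pn m \<phi>"
            by (simp add: abs_mult mult_left_mono)
        qed
        moreover have "\<bar>deriv \<phi> (x j i)\<bar> \<le> pn m \<phi>"
          using pn_ge[OF s\<phi>, of 1 m "x j i"] xm[OF True] by (simp add: hdr_Suc m_def)
        ultimately have "\<bar>(\<Sum>k<N j. D j i k * \<phi> (x j k)) - deriv \<phi> (x j i)\<bar> \<le> (\<Sum>k<N j. \<bar>D j i k\<bar> * pn m \<phi>) + pn m \<phi>"
          by linarith
        moreover have "C * pn m \<phi> = (\<Sum>k<N j. \<bar>D j i k\<bar> * pn m \<phi>) + pn m \<phi>"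
          by (simp add: C_def sum_distrib_right distrib_right)
        ultimately show ?thesis using True by (simp add: Lf_def ji)
      qed
    qed
    then show "\<exists>m C. \<forall>\<phi>\<in>Xs. \<bar>Lf ji \<phi>\<bar> \<le> C * pn m \<phi>" by blast
  next
    fix \<psi> assume \<psi>: "\<psi> \<in> Xs"
    then obtain C where C: "\<forall>j. \<forall>i<N j. \<bar>(\<Sum>k<N j. D j i k * \<psi> (x j k)) - deriv \<psi> (x j i)\<bar> \<le> C * dx j ^ p"
      using D_order unfolding derivative_matrix_of_order_def Xs_def by blast
    have "\<bar>Lf ji \<psi>\<bar> \<le> max C 0 * \<epsilon> ji" for ji
    proof -
      obtain j i where ji: "ji = (j, i)" by (cases ji)
      have e0: "0 \<le> dx j ^ p" using dx_pos[of j] by simp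
      show ?thesis
      proof (cases "i < N j")
        case True
        have "C * dx j ^ p \<le> max C 0 * dx j ^ p" using e0 by (intro mult_right_mono) auto
        then show ?thesis using C True by (auto simp: Lf_def \<epsilon>_def ji intro: order_trans)
      qed (use e0 in \<open>simp add: Lf_def \<epsilon>_def ji\<close>)
    qed
    then show "\<exists>C. \<forall>ji. \<bar>Lf ji \<psi>\<bar> \<le> C * \<epsilon> ji" by blast
  qed
  then obtain m K where mK: "\<forall>ji. \<forall>\<phi>\<in>Xs. \<bar>Lf ji \<phi>\<bar> \<le> K * \<epsilon> ji * pn m \<phi>" by blast
  have "\<forall>j. \<forall>i<N j. \<forall>\<phi>\<in>Xs. \<bar>(\<Sum>k<N j. D j i k * \<phi> (x j k)) - deriv \<phi> (x j i)\<bar> \<le> K * dx j ^ p * pn m \<phi>"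
  proof (intro allI impI ballI)
    fix j i \<phi> assume a: "i < N j" "\<phi> \<in> Xs"
    have "\<bar>Lf (j, i) \<phi>\<bar> \<le> K * \<epsilon> (j, i) * pn m \<phi>" using mK a(2) by blast
    then show "\<bar>(\<Sum>k<N j. D j i k * \<phi> (x j k)) - deriv \<phi> (x j i)\<bar> \<le> K * dx j ^ p * pn m \<phi>"
      using a(1) by (simp add: Lf_def \<epsilon>_def)
  qed
  then show ?thesis by blast
qed

lemma node_bound:
  fixes N :: "nat \<Rightarrow> nat" and x :: "nat \<Rightarrow> nat \<Rightarrow> real" and dx :: "nat \<Rightarrow> real"
    and D :: "nat \<Rightarrow> nat \<Rightarrow> nat \<Rightarrow> real" and p :: nat
  assumes dx_pos: "\<And>j. dx j > 0"
    and UBr: "\<forall>j. \<forall>i<N j. \<forall>\<phi>\<in>Xs. \<bar>(\<Sum>k<N j. D j i k * \<phi> (x j k)) - deriv \<phi> (x j i)\<bar> \<le> K * dx j ^ p * pn m0 \<phi>"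
  shows "\<forall>j. \<forall>i<N j. \<bar>x j i\<bar> \<le> real m0"
proof (intro allI impI)
  fix j i assume i: "i < N j"
  let ?Fs = "{..<N j}"
  have fin: "finite (x j ` ?Fs)" and ne: "x j ` ?Fs \<noteq> {}" using i by auto
  have Kb: "\<forall>\<phi>\<in>Xs. \<bar>(\<Sum>k\<in>?Fs. D j i' k * \<phi> (x j k)) - deriv \<phi> (x j i')\<bar> \<le> (\<bar>K\<bar> * dx j ^ p) * pn m0 \<phi>"
    if i': "i' < N j" for i'
  proof
    fix \<phi> assume \<phi>: "\<phi> \<in> Xs"
    have "K * dx j ^ p * pn m0 \<phi> \<le> \<bar>K\<bar> * dx j ^ p * pn m0 \<phi>"
      using pn_nonneg[of \<phi> m0] \<phi> dx_pos[of j] by (intro mult_right_mono) (auto simp: Xs_def)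
    then show "\<bar>(\<Sum>k\<in>?Fs. D j i' k * \<phi> (x j k)) - deriv \<phi> (x j i')\<bar> \<le> (\<bar>K\<bar> * dx j ^ p) * pn m0 \<phi>"
      using UBr i' \<phi> by (meson order_trans)
  qed
  have Kc: "0 \<le> \<bar>K\<bar> * dx j ^ p" using dx_pos[of j] by simp
  show "\<bar>x j i\<bar> \<le> real m0"
  proof (rule ccontr)
    assume "\<not> \<bar>x j i\<bar> \<le> real m0"
    then consider "x j i > real m0" | "x j i < - real m0" by linarith
    then show False
    proof cases
      case 1
      obtain i' where i': "i' < N j" and a: "x j i' = Max (x j ` ?Fs)"
        using Max_in[OF fin ne] by auto
      show False
      proof (rule exp_contra[where s=1 and c="\<lambda>k. D j i' k" and z="x j" and Fs="?Fs" and a="x j i'" and Kc="\<bar>K\<bar> * dx j ^ p", OF _ Kb[OF i'] Kc])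
        show "\<forall>k\<in>?Fs. 1 * (x j k - x j i') \<le> 0" using a fin by auto
        have "x j i \<le> x j i'" using a fin i by auto
        then show "1 * x j i' > real m0" using 1 by simp
      qed simp
    next
      case 2
      obtain i' where i': "i' < N j" and a: "x j i' = Min (x j ` ?Fs)"
        using Min_in[OF fin ne] by auto
      show False
      proof (rule exp_contra[where s="-1" and c="\<lambda>k. D j i' k" and z="x j" and Fs="?Fs" and a="x j i'" and Kc="\<bar>K\<bar> * dx j ^ p", OF _ Kb[OF i'] Kc])
        show "\<forall>k\<in>?Fs. -1 * (x j k - x j i') \<le> 0" using a fin by auto
        have "x j i' \<le> x j i" using a fin i by auto
        then show "-1 * x j i' > real m0" using 2 by simp
      qed simp
    qed
  qed
qed



theorem mainTheorem16:
  fixes N :: "nat \<Rightarrow> nat" and x :: "nat \<Rightarrow> nat \<Rightarrow> real" and dx :: "nat \<Rightarrow> real"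
    and D :: "nat \<Rightarrow> nat \<Rightarrow> nat \<Rightarrow> real" and p :: nat
    and Y :: "(real^'n) set" and u :: "real \<Rightarrow> real^'n"
    and H :: "real^'n \<Rightarrow> real^'m^'n" and g :: "real^'n \<Rightarrow> real^'m"
    and gvol :: "(real^'n) \<times> (real^'n) \<Rightarrow> real^'m"
    and Hvol :: "(real^'n) \<times> (real^'n) \<Rightarrow> real^'m^'n"
    and Hgvol :: "(real^'n) \<times> (real^'n) \<Rightarrow> real^'n"
  assumes dx_pos: "\<And>j. dx j > 0" and dx_lim: "dx \<longlonglongrightarrow> 0"
    and D_order: "derivative_matrix_of_order N x dx D p"
    and Y_open: "open Y"
    and u_smooth: "smooth_on UNIV u" and u_Y: "\<And>t. u t \<in> Y"
    and H_smooth: "smooth_on Y H" and g_smooth: "smooth_on Y g"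
    and gvol_smooth: "smooth_on (Y \<times> Y) gvol"
    and Hvol_smooth: "smooth_on (Y \<times> Y) Hvol"
    and Hgvol_smooth: "smooth_on (Y \<times> Y) Hgvol"
    and gvol_sym: "\<And>a b. a \<in> Y \<Longrightarrow> b \<in> Y \<Longrightarrow> gvol (a, b) = gvol (b, a)"
    and Hvol_sym: "\<And>a b. a \<in> Y \<Longrightarrow> b \<in> Y \<Longrightarrow> Hvol (a, b) = Hvol (b, a)"
    and Hgvol_sym: "\<And>a b. a \<in> Y \<Longrightarrow> b \<in> Y \<Longrightarrow> Hgvol (a, b) = Hgvol (b, a)"
    and gvol_cons: "\<And>a. a \<in> Y \<Longrightarrow> gvol (a, a) = g a"
    and Hvol_cons: "\<And>a. a \<in> Y \<Longrightarrow> Hvol (a, a) = H a"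
    and Hgvol_cons: "\<And>a. a \<in> Y \<Longrightarrow> Hgvol (a, a) = H a *v g a"
  shows
    "(\<exists>C. \<forall>j. \<forall>i<N j.
        norm ((\<Sum>k<N j. (2 * D j i k) *\<^sub>R (H (u (x j i)) *v gvol (u (x j i), u (x j k))))
              - H (u (x j i)) *v vector_derivative (g \<circ> u) (at (x j i)))
        \<le> C * dx j ^ p)
   \<and> (\<exists>C. \<forall>j. \<forall>i<N j.
        norm ((\<Sum>k<N j. D j i k *\<^sub>R (Hvol (u (x j i), u (x j k)) *v (g (u (x j k)) - g (u (x j i)))))
              - H (u (x j i)) *v vector_derivative (g \<circ> u) (at (x j i)))
        \<le> C * dx j ^ p)
   \<and> (\<exists>C. \<forall>j. \<forall>i<N j.
        norm ((\<Sum>k<N j. (2 * D j i k) *\<^sub>R Hgvol (u (x j i), u (x j k))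
                        - (2 * D j i k) *\<^sub>R (Hvol (u (x j i), u (x j k)) *v g (u (x j i))))
              - H (u (x j i)) *v vector_derivative (g \<circ> u) (at (x j i)))
        \<le> C * dx j ^ p)"
proof -
  obtain m0 K where UBr: "\<forall>j. \<forall>i<N j. \<forall>\<phi>\<in>Xs. \<bar>(\<Sum>k<N j. D j i k * \<phi> (x j k)) - deriv \<phi> (x j i)\<bar> \<le> K * dx j ^ p * pn m0 \<phi>"
    using UB_inst[OF dx_pos D_order] by blast
  have nb: "\<forall>j. \<forall>i<N j. \<bar>x j i\<bar> \<le> real m0" using node_bound[OF dx_pos UBr] .
  have YY: "open (Y \<times> Y)" using Y_open by (intro open_Times)
  have bbmv: "bounded_bilinear (\<lambda>(A::real^'m^'n) (w::real^'m). A *v w)" by (rule bb_mv)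
  have uf: "smooth_on UNIV (\<lambda>z::real\<times>real. u (fst z))"
    by (rule smooth_on_compose[OF open_UNIV open_UNIV smooth_on_linear[OF open_UNIV bounded_linear_fst] _ u_smooth]) simp
  have us: "smooth_on UNIV (\<lambda>z::real\<times>real. u (snd z))"
    by (rule smooth_on_compose[OF open_UNIV open_UNIV smooth_on_linear[OF open_UNIV bounded_linear_snd] _ u_smooth]) simp
  have P: "smooth_on UNIV (\<lambda>z::real\<times>real. (u (fst z), u (snd z)))" by (rule smooth_on_pair[OF open_UNIV uf us])
  have PY: "(\<lambda>z::real\<times>real. (u (fst z), u (snd z))) ` UNIV \<subseteq> Y \<times> Y" using u_Y by auto
  have uY1: "(\<lambda>z::real\<times>real. u (fst z)) ` UNIV \<subseteq> Y" using u_Y by auto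
  have uY2: "(\<lambda>z::real\<times>real. u (snd z)) ` UNIV \<subseteq> Y" using u_Y by auto
  have gv: "smooth_on UNIV (\<lambda>z::real\<times>real. gvol (u (fst z), u (snd z)))"
    by (rule smooth_on_compose[OF open_UNIV YY P PY gvol_smooth])
  have Hv: "smooth_on UNIV (\<lambda>z::real\<times>real. Hvol (u (fst z), u (snd z)))"
    by (rule smooth_on_compose[OF open_UNIV YY P PY Hvol_smooth])
  have Hgv: "smooth_on UNIV (\<lambda>z::real\<times>real. Hgvol (u (fst z), u (snd z)))"
    by (rule smooth_on_compose[OF open_UNIV YY P PY Hgvol_smooth])
  have Hu: "smooth_on UNIV (\<lambda>z::real\<times>real. H (u (fst z)))"
    by (rule smooth_on_compose[OF open_UNIV Y_open uf uY1 H_smooth])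
  have gu1: "smooth_on UNIV (\<lambda>z::real\<times>real. g (u (fst z)))"
    by (rule smooth_on_compose[OF open_UNIV Y_open uf uY1 g_smooth])
  have gu2: "smooth_on UNIV (\<lambda>z::real\<times>real. g (u (snd z)))"
    by (rule smooth_on_compose[OF open_UNIV Y_open us uY2 g_smooth])
  have two: "bounded_linear (\<lambda>v::real^'m. 2 *\<^sub>R v)" "bounded_linear (\<lambda>v::real^'n. 2 *\<^sub>R v)"
    by (auto intro: bounded_linear_scaleR_right)
  have S1: "smooth_on UNIV (\<lambda>z::real\<times>real. 2 *\<^sub>R (H (u (fst z)) *v gvol (u (fst z), u (snd z))))"
    using smooth_on_linear_comp[OF open_UNIV two(2) smooth_on_bilinear[OF open_UNIV bbmv Hu gv]] by simp
  have S2: "smooth_on UNIV (\<lambda>z::real\<times>real. Hvol (u (fst z), u (snd z)) *v (g (u (snd z)) - g (u (fst z))))"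
    using smooth_on_bilinear[OF open_UNIV bbmv Hv smooth_on_minus[OF open_UNIV gu2 gu1]] by simp
  have S3: "smooth_on UNIV (\<lambda>z::real\<times>real. 2 *\<^sub>R Hgvol (u (fst z), u (snd z)) - 2 *\<^sub>R (Hvol (u (fst z), u (snd z)) *v g (u (fst z))))"
    using smooth_on_minus[OF open_UNIV smooth_on_linear_comp[OF open_UNIV two(2) Hgv]
        smooth_on_linear_comp[OF open_UNIV two(2) smooth_on_bilinear[OF open_UNIV bbmv Hv gu1]]] by simp
  define Pg where "Pg a = frechet_derivative gvol (at (u a, u a)) (0, Ud u a)" for a
  define PH where "PH a = frechet_derivative Hvol (at (u a, u a)) (0, Ud u a)" for a
  define PHg where "PHg a = frechet_derivative Hgvol (at (u a, u a)) (0, Ud u a)" for a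
  have cg: "((\<lambda>y. gvol (u a, u y)) has_vector_derivative Pg a) (at a)" for a
    unfolding Pg_def by (rule curve_partial[OF Y_open gvol_smooth u_smooth u_Y])
  have cH: "((\<lambda>y. Hvol (u a, u y)) has_vector_derivative PH a) (at a)" for a
    unfolding PH_def by (rule curve_partial[OF Y_open Hvol_smooth u_smooth u_Y])
  have cHg: "((\<lambda>y. Hgvol (u a, u y)) has_vector_derivative PHg a) (at a)" for a
    unfolding PHg_def by (rule curve_partial[OF Y_open Hgvol_smooth u_smooth u_Y])
  have dg: "((\<lambda>s. g (u s)) has_vector_derivative 2 *\<^sub>R Pg a) (at a)" for a
  proof -
    have "(\<lambda>s. g (u s)) = (\<lambda>s. gvol (u s, u s))" using gvol_cons u_Y by auto
    then show ?thesis unfolding Pg_def using curve_diag[OF Y_open gvol_smooth u_smooth u_Y gvol_sym] by simp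
  qed
  have vdg: "vector_derivative (g \<circ> u) (at a) = 2 *\<^sub>R Pg a" for a
    using vector_derivative_at[OF dg[of a]] by (simp add: o_def)
  have dH: "((\<lambda>s. H (u s)) has_vector_derivative 2 *\<^sub>R PH a) (at a)" for a
  proof -
    have "(\<lambda>s. H (u s)) = (\<lambda>s. Hvol (u s, u s))" using Hvol_cons u_Y by auto
    then show ?thesis unfolding PH_def using curve_diag[OF Y_open Hvol_smooth u_smooth u_Y Hvol_sym] by simp
  qed
  have dHg: "((\<lambda>s. H (u s) *v g (u s)) has_vector_derivative 2 *\<^sub>R PHg a) (at a)" for a
  proof -
    have "(\<lambda>s. H (u s) *v g (u s)) = (\<lambda>s. Hgvol (u s, u s))" using Hgvol_cons u_Y by auto
    then show ?thesis unfolding PHg_def using curve_diag[OF Y_open Hgvol_smooth u_smooth u_Y Hgvol_sym] by simp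
  qed
  have prodrule: "((\<lambda>s. H (u s) *v g (u s)) has_vector_derivative (H (u a) *v (2 *\<^sub>R Pg a) + (2 *\<^sub>R PH a) *v g (u a))) (at a)" for a
    using bounded_bilinear.has_vector_derivative[OF bbmv dH[of a] dg[of a]] by simp
  have key3: "2 *\<^sub>R PHg a = H (u a) *v (2 *\<^sub>R Pg a) + (2 *\<^sub>R PH a) *v g (u a)" for a
    by (rule vector_derivative_unique_at[OF dHg prodrule])
  have T1: "((\<lambda>y. 2 *\<^sub>R (H (u a) *v gvol (u a, u y))) has_vector_derivative H (u a) *v vector_derivative (g \<circ> u) (at a)) (at a)" for a
  proof -
    have bl: "bounded_linear (\<lambda>v. 2 *\<^sub>R (H (u a) *v v))"
      by (intro bounded_linear_compose[OF two(2)] matrix_vector_mul_bounded_linear)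
    show ?thesis using bounded_linear.has_vector_derivative[OF bl cg[of a]]
      by (simp add: vdg matrix_vector_mult_scaleR)
  qed
  have T2: "((\<lambda>y. Hvol (u a, u y) *v (g (u y) - g (u a))) has_vector_derivative H (u a) *v vector_derivative (g \<circ> u) (at a)) (at a)" for a
  proof -
    have "((\<lambda>y. g (u y) - g (u a)) has_vector_derivative 2 *\<^sub>R Pg a - 0) (at a)"
      by (intro has_vector_derivative_diff dg has_vector_derivative_const)
    from bounded_bilinear.has_vector_derivative[OF bbmv cH[of a] this]
    show ?thesis using Hvol_cons[OF u_Y] by (simp add: vdg)
  qed
  have T3: "((\<lambda>y. 2 *\<^sub>R Hgvol (u a, u y) - 2 *\<^sub>R (Hvol (u a, u y) *v g (u a))) has_vector_derivative H (u a) *v vector_derivative (g \<circ> u) (at a)) (at a)" for a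
  proof -
    have a1: "((\<lambda>y. 2 *\<^sub>R Hgvol (u a, u y)) has_vector_derivative 2 *\<^sub>R PHg a) (at a)"
      using bounded_linear.has_vector_derivative[OF two(2) cHg[of a]] .
    have a2: "((\<lambda>y. Hvol (u a, u y) *v g (u a)) has_vector_derivative (Hvol (u a, u a) *v 0 + PH a *v g (u a))) (at a)"
      using bounded_bilinear.has_vector_derivative[OF bbmv cH[of a] has_vector_derivative_const[of "g (u a)"]] .
    have a3: "((\<lambda>y. 2 *\<^sub>R (Hvol (u a, u y) *v g (u a))) has_vector_derivative 2 *\<^sub>R (PH a *v g (u a))) (at a)"
      using bounded_linear.has_vector_derivative[OF two(2) a2] by simp
    have "((\<lambda>y. 2 *\<^sub>R Hgvol (u a, u y) - 2 *\<^sub>R (Hvol (u a, u y) *v g (u a))) has_vector_derivative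
          2 *\<^sub>R PHg a - 2 *\<^sub>R (PH a *v g (u a))) (at a)"
      by (rule has_vector_derivative_diff[OF a1 a3])
    moreover have "2 *\<^sub>R PHg a - 2 *\<^sub>R (PH a *v g (u a)) = H (u a) *v vector_derivative (g \<circ> u) (at a)"
      unfolding key3 vdg by (simp add: scaleR_matrix_vector_assoc)
    ultimately show ?thesis by simp
  qed
  obtain C1 where C1: "\<forall>j. \<forall>i<N j. norm ((\<Sum>k<N j. D j i k *\<^sub>R (\<lambda>z::real\<times>real. 2 *\<^sub>R (H (u (fst z)) *v gvol (u (fst z), u (snd z)))) (x j i, x j k))
       - H (u (x j i)) *v vector_derivative (g \<circ> u) (at (x j i))) \<le> C1 * dx j ^ p"
    using FIN[OF S1 _ UBr nb dx_pos, of "\<lambda>a. H (u a) *v vector_derivative (g \<circ> u) (at a)"] T1 by auto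
  obtain C2 where C2: "\<forall>j. \<forall>i<N j. norm ((\<Sum>k<N j. D j i k *\<^sub>R (\<lambda>z::real\<times>real. Hvol (u (fst z), u (snd z)) *v (g (u (snd z)) - g (u (fst z)))) (x j i, x j k))
       - H (u (x j i)) *v vector_derivative (g \<circ> u) (at (x j i))) \<le> C2 * dx j ^ p"
    using FIN[OF S2 _ UBr nb dx_pos, of "\<lambda>a. H (u a) *v vector_derivative (g \<circ> u) (at a)"] T2 by auto
  obtain C3 where C3: "\<forall>j. \<forall>i<N j. norm ((\<Sum>k<N j. D j i k *\<^sub>R (\<lambda>z::real\<times>real. 2 *\<^sub>R Hgvol (u (fst z), u (snd z)) - 2 *\<^sub>R (Hvol (u (fst z), u (snd z)) *v g (u (fst z)))) (x j i, x j k))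
       - H (u (x j i)) *v vector_derivative (g \<circ> u) (at (x j i))) \<le> C3 * dx j ^ p"
    using FIN[OF S3 _ UBr nb dx_pos, of "\<lambda>a. H (u a) *v vector_derivative (g \<circ> u) (at a)"] T3 by auto
  have e1: "(\<Sum>k<N j. (2 * D j i k) *\<^sub>R (H (u (x j i)) *v gvol (u (x j i), u (x j k)))) =
     (\<Sum>k<N j. D j i k *\<^sub>R (\<lambda>z::real\<times>real. 2 *\<^sub>R (H (u (fst z)) *v gvol (u (fst z), u (snd z)))) (x j i, x j k))" for j i
    by (rule sum.cong) (auto simp: mult.commute)
  have e3: "(\<Sum>k<N j. (2 * D j i k) *\<^sub>R Hgvol (u (x j i), u (x j k)) - (2 * D j i k) *\<^sub>R (Hvol (u (x j i), u (x j k)) *v g (u (x j i)))) =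
     (\<Sum>k<N j. D j i k *\<^sub>R (\<lambda>z::real\<times>real. 2 *\<^sub>R Hgvol (u (fst z), u (snd z)) - 2 *\<^sub>R (Hvol (u (fst z), u (snd z)) *v g (u (fst z)))) (x j i, x j k))" for j i
    by (rule sum.cong) (auto simp: mult.commute scaleR_diff_right)
  show ?thesis
  proof (intro conjI)
    show "\<exists>C. \<forall>j. \<forall>i<N j. norm ((\<Sum>k<N j. (2 * D j i k) *\<^sub>R (H (u (x j i)) *v gvol (u (x j i), u (x j k))))
              - H (u (x j i)) *v vector_derivative (g \<circ> u) (at (x j i))) \<le> C * dx j ^ p"
      using C1 unfolding e1 by blast
    show "\<exists>C. \<forall>j. \<forall>i<N j. norm ((\<Sum>k<N j. D j i k *\<^sub>R (Hvol (u (x j i), u (x j k)) *v (g (u (x j k)) - g (u (x j i)))))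
              - H (u (x j i)) *v vector_derivative (g \<circ> u) (at (x j i))) \<le> C * dx j ^ p"
      using C2 by auto
    show "\<exists>C. \<forall>j. \<forall>i<N j. norm ((\<Sum>k<N j. (2 * D j i k) *\<^sub>R Hgvol (u (x j i), u (x j k))
                        - (2 * D j i k) *\<^sub>R (Hvol (u (x j i), u (x j k)) *v g (u (x j i))))
              - H (u (x j i)) *v vector_derivative (g \<circ> u) (at (x j i))) \<le> C * dx j ^ p"
      using C3 unfolding e3 by blast
  qed
qed


end
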